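(* Let $(G,\omega)$ be a weighted digraph without loops, let $H_1,\dots,H_s$ be the undirectizations of its strongly connected or single node components, let $V$ be its square-rooted weighted Hashimoto matrix, let $\sigma$ be the smallest positive entry of $V$ (when $V\ne0$), and let $r$ be the radius of convergence of $\sum_{k=0}^\infty t^kp_k(A)$. Then: (a) if every $H_i$ is a tree or an isolated node, then $r=\infty$; (b) if no $H_i$ has more than one cycle but at least one $H_i$ has exactly one cycle, then $r\le1/\sigma$; (c) if some $H_i$ has more than one cycle, then $r<1/\sigma$.
   Context: A weighted digraph: digraph $G$ (no loops or multiple edges) with $\omega:E\to(0,\infty)$. Weight of a walk = product of weights of its edges (with repetition); non-backtracking walk: $v_{r+2}\ne v_r$ for all $r$. $p_k(A)_{ij}$ = sum of weights of non-backtracking walks of length $k$ from $i$ to $j$, $p_0(A)=I$. $V_{ef}=\sqrt{\omega(e)\omega(f)}$ if $e=(i,j),f=(j,k)$ with $k\ne i$, else $0$. Components: induced subgraphs on classes of "$i=j$ or mutually reachable by directed walks". Undirectization: undirected simple graph with edge $\{i,j\}$ whenever $(i,j)$ or $(j,i)$ is an edge; a cycle is a closed path of length $\ge3$ up to cyclic permutations and reversal. *)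

theory Defs
  imports "HOL-Analysis.Analysis"
begin

text \<open>A weighted digraph: vertex type 'n (finite), edge set E (no loops), weight function w
  (only its values on E matter; positivity on E is assumed in the theorem).\<close>

definition nb_walk :: "('n \<times> 'n) set \<Rightarrow> 'n list \<Rightarrow> bool" where
  "nb_walk E vs \<longleftrightarrow> vs \<noteq> [] \<and>
     (\<forall>r. r + 1 < length vs \<longrightarrow> (vs ! r, vs ! (r + 1)) \<in> E) \<and>
     (\<forall>r. r + 2 < length vs \<longrightarrow> vs ! (r + 2) \<noteq> vs ! r)"

definition walk_weight :: "('n \<times> 'n \<Rightarrow> real) \<Rightarrow> 'n list \<Rightarrow> real" where
  "walk_weight w vs = (\<Prod>r < length vs - 1. w (vs ! r, vs ! (r + 1)))"

definition pk :: "('n::finite \<times> 'n) set \<Rightarrow> ('n \<times> 'n \<Rightarrow> real) \<Rightarrow> nat \<Rightarrow> real ^'n ^'n" where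
  "pk E w k = (\<chi> i j. \<Sum>vs \<in> {vs. length vs = k + 1 \<and> nb_walk E vs \<and> hd vs = i \<and> last vs = j}.
                         walk_weight w vs)"

definition hashimoto_sqrt :: "('n \<times> 'n) set \<Rightarrow> ('n \<times> 'n \<Rightarrow> real) \<Rightarrow> 'n \<times> 'n \<Rightarrow> 'n \<times> 'n \<Rightarrow> real" where
  "hashimoto_sqrt E w e f =
     (if e \<in> E \<and> f \<in> E \<and> snd e = fst f \<and> snd f \<noteq> fst e then sqrt (w e * w f) else 0)"

definition sigma_min :: "('n \<times> 'n) set \<Rightarrow> ('n \<times> 'n \<Rightarrow> real) \<Rightarrow> real" where
  "sigma_min E w = Min {hashimoto_sqrt E w e f | e f. e \<in> E \<and> f \<in> E \<and> hashimoto_sqrt E w e f > 0}"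

definition comp_rel :: "('n \<times> 'n) set \<Rightarrow> ('n \<times> 'n) set" where
  "comp_rel E = {(i, j). i = j \<or> ((i, j) \<in> E\<^sup>+ \<and> (j, i) \<in> E\<^sup>+)}"

definition components :: "('n \<times> 'n) set \<Rightarrow> 'n set set" where
  "components E = UNIV // comp_rel E"

text \<open>Undirectization of the component induced on C: adjacency relation on C.\<close>
definition und_adj :: "('n \<times> 'n) set \<Rightarrow> 'n set \<Rightarrow> 'n \<Rightarrow> 'n \<Rightarrow> bool" where
  "und_adj E C i j \<longleftrightarrow> i \<in> C \<and> j \<in> C \<and> i \<noteq> j \<and> ((i, j) \<in> E \<or> (j, i) \<in> E)"

definition cycle_list :: "('n \<Rightarrow> 'n \<Rightarrow> bool) \<Rightarrow> 'n list \<Rightarrow> bool" where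
  "cycle_list adj xs \<longleftrightarrow> length xs \<ge> 3 \<and> distinct xs \<and>
     (\<forall>r. r + 1 < length xs \<longrightarrow> adj (xs ! r) (xs ! (r + 1))) \<and> adj (last xs) (hd xs)"

text \<open>Cycles: closed paths up to cyclic permutation and reversal.\<close>
definition cycles :: "('n \<Rightarrow> 'n \<Rightarrow> bool) \<Rightarrow> 'n list set set" where
  "cycles adj = {{ys. \<exists>k. ys = rotate k xs \<or> ys = rotate k (rev xs)} | xs. cycle_list adj xs}"

definition und_connected :: "('n \<Rightarrow> 'n \<Rightarrow> bool) \<Rightarrow> 'n set \<Rightarrow> bool" where
  "und_connected adj C \<longleftrightarrow> (\<forall>i\<in>C. \<forall>j\<in>C. (i, j) \<in> {(a, b). adj a b}\<^sup>*)"

definition is_tree :: "('n \<Rightarrow> 'n \<Rightarrow> bool) \<Rightarrow> 'n set \<Rightarrow> bool" where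
  "is_tree adj C \<longleftrightarrow> C \<noteq> {} \<and> und_connected adj C \<and> cycles adj = {}"

definition is_isolated_node :: "('n \<Rightarrow> 'n \<Rightarrow> bool) \<Rightarrow> 'n set \<Rightarrow> bool" where
  "is_isolated_node adj C \<longleftrightarrow> card C = 1 \<and> (\<forall>i j. \<not> adj i j)"

end

theory Submission
  imports Defs
begin


definition epath :: "('n \<times> 'n) set \<Rightarrow> 'n list \<Rightarrow> bool" where
  "epath E W \<longleftrightarrow> (\<forall>r. Suc r < length W \<longrightarrow> (W!r, W!Suc r) \<in> E)"
definition nbk :: "'n list \<Rightarrow> bool" where
  "nbk W \<longleftrightarrow> (\<forall>r. Suc (Suc r) < length W \<longrightarrow> W!Suc (Suc r) \<noteq> W!r)"

lemma nb_walk_iff: "nb_walk E W \<longleftrightarrow> W \<noteq> [] \<and> epath E W \<and> nbk W"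
  unfolding nb_walk_def epath_def nbk_def by simp

lemma epath_Cons2: "epath E (x # y # zs) \<longleftrightarrow> (x,y) \<in> E \<and> epath E (y # zs)"
  unfolding epath_def by (auto simp: less_Suc_eq_0_disj)

lemma nbk_Cons2: "nbk (x # y # zs) \<longleftrightarrow> (zs \<noteq> [] \<longrightarrow> hd zs \<noteq> x) \<and> nbk (y # zs)"
  unfolding nbk_def by (cases zs) (auto simp: less_Suc_eq_0_disj)

lemma nb_walk_Cons2:
  "nb_walk E (x # y # zs) \<longleftrightarrow> (x,y) \<in> E \<and> (zs \<noteq> [] \<longrightarrow> hd zs \<noteq> x) \<and> nb_walk E (y # zs)"
  unfolding nb_walk_iff epath_Cons2 nbk_Cons2 by auto

lemma nb_walk_single[simp]: "nb_walk E [x]"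
  by (simp add: nb_walk_def)

lemma nb_walk_Nil[simp]: "\<not> nb_walk E []" by (simp add: nb_walk_def)

lemma nb_walk_tl: "nb_walk E (x # y # zs) \<Longrightarrow> nb_walk E (y # zs)"
  by (simp add: nb_walk_Cons2)

lemma nb_append:
  assumes "nb_walk E xs" "nb_walk E ys" "last xs = hd ys"
    "length xs \<ge> 2 \<Longrightarrow> length ys \<ge> 2 \<Longrightarrow> xs ! (length xs - 2) \<noteq> ys ! 1"
  shows "nb_walk E (xs @ tl ys)"
  using assms
proof (induction xs rule: induct_list012)
  case 1 thus ?case by simp
next
  case (2 x) thus ?case using \<open>nb_walk E ys\<close> by (cases ys) auto
next
  case (3 x y zs)
  have n: "(x,y) \<in> E" "zs \<noteq> [] \<longrightarrow> hd zs \<noteq> x" "nb_walk E (y # zs)"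
    using "3.prems"(1) by (simp_all add: nb_walk_Cons2)
  have IH: "nb_walk E ((y # zs) @ tl ys)"
  proof (rule "3.IH"(2)[OF n(3) "3.prems"(2)])
    show "last (y # zs) = hd ys" using "3.prems"(3) by simp
    show "length (y # zs) \<ge> 2 \<Longrightarrow> length ys \<ge> 2 \<Longrightarrow> (y # zs) ! (length (y # zs) - 2) \<noteq> ys ! 1"
      using "3.prems"(4) by (cases zs) auto
  qed
  have hd: "zs @ tl ys \<noteq> [] \<longrightarrow> hd (zs @ tl ys) \<noteq> x"
  proof (cases zs)
    case Nil
    then show ?thesis using "3.prems"(3,4) by (cases ys; cases "tl ys") auto
  next
    case (Cons a l) thus ?thesis using n(2) by simp
  qed
  show ?case using n(1) hd IH by (simp add: nb_walk_Cons2)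
qed

lemma nb_walk_segment:
  assumes W: "nb_walk E W" and se: "s \<le> e" "e < length W"
  shows "nb_walk E (take (e - s + 1) (drop s W))"
proof -
  define P where "P = take (e - s + 1) (drop s W)"
  have lP: "length P = e - s + 1" unfolding P_def using se by simp
  have nP: "\<And>r. r < length P \<Longrightarrow> P ! r = W ! (s + r)"
    unfolding P_def using se by (simp add: nth_take nth_drop)
  have e1: "\<And>r. Suc r < length W \<Longrightarrow> (W!r, W!Suc r) \<in> E"
    and b1: "\<And>r. r + 2 < length W \<Longrightarrow> W!(r+2) \<noteq> W!r"
    using W unfolding nb_walk_iff epath_def nbk_def by (auto simp: numeral_2_eq_2)
  have "P \<noteq> []" using lP by auto
  moreover have "epath E P" unfolding epath_def
  proof (intro allI impI)
    fix r assume r: "Suc r < length P"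
    have "(W!(s+r), W!Suc (s+r)) \<in> E" using e1[of "s+r"] r lP se by simp
    thus "(P!r, P!Suc r) \<in> E" using nP[of r] nP[of "Suc r"] r by simp
  qed
  moreover have "nbk P" unfolding nbk_def
  proof (intro allI impI)
    fix r assume r: "Suc (Suc r) < length P"
    have "W!(s+r+2) \<noteq> W!(s+r)" using b1[of "s+r"] r lP se by simp
    thus "P!Suc (Suc r) \<noteq> P!r" using nP[of r] nP[of "r+2"] r by (simp add: add.assoc)
  qed
  ultimately show ?thesis unfolding P_def[symmetric] nb_walk_iff by blast
qed

lemma distinct_nb_walk:
  assumes "distinct W" "W \<noteq> []" "epath E W" shows "nb_walk E W"
  unfolding nb_walk_iff nbk_def
proof (intro conjI allI impI)
  fix r assume "Suc (Suc r) < length W"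
  thus "W!Suc (Suc r) \<noteq> W!r" using assms(1) by (simp add: nth_eq_iff_index_eq)
qed (use assms in auto)

lemma nb_walk_epath: "nb_walk E W \<Longrightarrow> epath E W"
  by (simp add: nb_walk_iff)

lemma walk_weight_Cons2: "walk_weight w (x # y # zs) = w (x,y) * walk_weight w (y # zs)"
  unfolding walk_weight_def by (simp del: prod.lessThan_Suc add: prod.lessThan_Suc_shift)

lemma walk_weight_single[simp]: "walk_weight w [x] = 1"
  unfolding walk_weight_def by simp

lemma walk_weight_nonneg:
  assumes "\<forall>e\<in>E. w e > 0" "epath E W"
  shows "walk_weight w W \<ge> 0"
  using assms unfolding walk_weight_def epath_def
  by (intro prod_nonneg) (auto intro: less_imp_le)

lemma walk_weight_bound_aux:
  assumes wm: "wmin > 0" "\<forall>e\<in>E. w e \<ge> wmin" and sg: "sg \<ge> 0"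
    and V: "\<And>a b c. (a,b) \<in> E \<Longrightarrow> (b,c) \<in> E \<Longrightarrow> c \<noteq> a \<Longrightarrow> sqrt (w (a,b) * w (b,c)) \<ge> sg"
  shows "nb_walk E (x # y # zs) \<Longrightarrow>
     walk_weight w (x # y # zs) \<ge> sqrt wmin * sg ^ length zs * sqrt (w (x,y))"
proof (induction zs arbitrary: x y)
  case Nil
  have "(x,y) \<in> E" using Nil by (simp add: nb_walk_Cons2)
  hence "w (x,y) \<ge> wmin" using wm by auto
  hence "sqrt wmin * sqrt (w (x,y)) \<le> sqrt (w(x,y)) * sqrt (w (x,y))"
    using wm by (intro mult_right_mono) auto
  also have "\<dots> = w (x,y)" using wm \<open>w (x,y) \<ge> wmin\<close> by simp
  finally show ?case by (simp add: walk_weight_Cons2)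
next
  case (Cons z zs)
  have n: "(x,y) \<in> E" "z \<noteq> x" "nb_walk E (y # z # zs)"
    using Cons.prems nb_walk_Cons2[of E x y "z#zs"] by auto
  have yz: "(y,z) \<in> E" using n(3) by (simp add: nb_walk_Cons2)
  have wxy: "w (x,y) > 0" "w (y,z) > 0" using wm n(1) yz by (auto intro: less_le_trans)
  have IH: "walk_weight w (y # z # zs) \<ge> sqrt wmin * sg ^ length zs * sqrt (w (y,z))"
    using Cons.IH[OF n(3)] .
  have "sqrt wmin * sg ^ length (z#zs) * sqrt (w (x,y))
        = sqrt (w (x,y)) * (sqrt wmin * sg ^ length zs) * sg" by (simp add: algebra_simps)
  also have "\<dots> \<le> sqrt (w (x,y)) * (sqrt wmin * sg ^ length zs) * sqrt (w (x,y) * w (y,z))"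
    using V[OF n(1) yz n(2)] wm sg wxy by (intro mult_left_mono) auto
  also have "\<dots> = w (x,y) * (sqrt wmin * sg ^ length zs * sqrt (w (y,z)))"
    using wxy by (simp add: real_sqrt_mult algebra_simps)
  also have "\<dots> \<le> w (x,y) * walk_weight w (y # z # zs)"
    using IH wxy by (intro mult_left_mono) auto
  finally show ?case by (simp add: walk_weight_Cons2)
qed

lemma walk_weight_bound:
  assumes wm: "wmin > 0" "\<forall>e\<in>E. w e \<ge> wmin" and sg: "sg \<ge> 0"
    and V: "\<And>a b c. (a,b) \<in> E \<Longrightarrow> (b,c) \<in> E \<Longrightarrow> c \<noteq> a \<Longrightarrow> sqrt (w (a,b) * w (b,c)) \<ge> sg"
    and W: "nb_walk E W" "length W = k + 2"
  shows "walk_weight w W \<ge> wmin * sg ^ k"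
proof -
  obtain x y zs where Wx: "W = x # y # zs" using W(2) by (cases W; cases "tl W") auto
  have k: "length zs = k" using W(2) Wx by simp
  have xy: "(x,y) \<in> E" using W(1) unfolding Wx nb_walk_Cons2 by simp
  have "wmin * sg ^ k = sqrt wmin * sg ^ k * sqrt wmin" using wm by (simp add: algebra_simps)
  also have "\<dots> \<le> sqrt wmin * sg ^ k * sqrt (w (x,y))"
    using wm xy sg by (intro mult_left_mono) auto
  also have "\<dots> \<le> walk_weight w W"
  proof -
    have "nb_walk E (x # y # zs)" using W(1) Wx by simp
    from walk_weight_bound_aux[OF wm sg V this] show ?thesis unfolding Wx k[symmetric] .
  qed
  finally show ?thesis .
qed


lemma finite_walkset: "finite {vs::('n::finite) list. length vs = k + 1 \<and> Q vs}"
proof -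
  have "{vs::'n list. length vs = k + 1 \<and> Q vs} \<subseteq> {xs. set xs \<subseteq> UNIV \<and> length xs = k+1}" by auto
  moreover have "finite {xs::'n list. set xs \<subseteq> UNIV \<and> length xs = k+1}"
    by (rule finite_lists_length_eq) simp
  ultimately show ?thesis by (rule finite_subset)
qed

lemma pk_ge:
  assumes wpos: "\<forall>e\<in>E. w e > 0"
    and T: "T \<subseteq> {vs. length vs = k + 1 \<and> nb_walk E vs \<and> hd vs = i \<and> last vs = j}"
  shows "pk E w k $ i $ j \<ge> sum (walk_weight w) T"
proof -
  let ?S = "{vs. length vs = k + 1 \<and> nb_walk E vs \<and> hd vs = i \<and> last vs = j}"
  have fS: "finite ?S" by (rule finite_walkset)
  have "sum (walk_weight w) T \<le> sum (walk_weight w) ?S"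
    using T fS by (intro sum_mono2) (auto intro!: walk_weight_nonneg[OF wpos] nb_walk_epath)
  thus ?thesis unfolding pk_def by simp
qed

lemma norm_pk_ge: "norm (pk E w k) \<ge> \<bar>pk E w k $ i $ j\<bar>"
proof -
  have "\<bar>pk E w k $ i $ j\<bar> = norm (pk E w k $ i $ j)" by simp
  also have "\<dots> \<le> norm (pk E w k $ i)" by (rule Finite_Cartesian_Product.norm_nth_le)
  also have "\<dots> \<le> norm (pk E w k)" by (rule Finite_Cartesian_Product.norm_nth_le)
  finally show ?thesis .
qed

lemma epath_reach:
  assumes "epath E W" "i < j" "j < length W"
  shows "(W!i, W!j) \<in> E\<^sup>+"
  using assms(2,3)
proof (induction j)
  case 0 thus ?case by simp
next
  case (Suc j)
  have e: "(W!j, W!Suc j) \<in> E" using assms(1) Suc.prems unfolding epath_def by simp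
  show ?case
  proof (cases "i = j")
    case True thus ?thesis using e by auto
  next
    case False
    hence "(W!i, W!j) \<in> E\<^sup>+" using Suc by simp
    thus ?thesis using e by (rule trancl_into_trancl)
  qed
qed

lemma comp_in_components: "comp_rel E `` {x} \<in> components E"
  unfolding components_def by (rule quotientI) simp

lemma long_walk_cycle:
  fixes E :: "('n::finite \<times> 'n) set"
  assumes noloops: "\<forall>i. (i, i) \<notin> E"
    and W: "nb_walk E vs" and len: "length vs > CARD('n)"
  shows "\<exists>C\<in>components E. \<exists>xs. cycle_list (und_adj E C) xs"
proof -
  have ep: "epath E vs" using W by (rule nb_walk_epath)
  have "card (set vs) \<le> CARD('n)" by (rule card_mono) auto
  hence "\<not> distinct vs" using len distinct_card by fastforce
  then obtain a b where ab: "a < length vs" "b < length vs" "a \<noteq> b" "vs!a = vs!b"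
    by (auto simp: distinct_conv_nth)
  define Q where "Q = (\<lambda>d. d > 0 \<and> (\<exists>a. a + d < length vs \<and> vs!a = vs!(a+d)))"
  have "Q (if a < b then b - a else a - b)"
    unfolding Q_def using ab by (cases "a < b") (auto intro!: exI[of _ "min a b"])
  hence Qd: "Q (LEAST d. Q d)" by (rule LeastI)
  define d where "d = (LEAST d. Q d)"
  have dmin: "\<And>d'. Q d' \<Longrightarrow> d \<le> d'" unfolding d_def by (rule Least_le)
  have "Q d" using Qd d_def by simp
  then obtain a where a: "d > 0" "a + d < length vs" "vs!a = vs!(a+d)"
    unfolding Q_def by blast
  define xs where "xs = take d (drop a vs)"
  have lx: "length xs = d" unfolding xs_def using a by simp
  have nx: "\<And>p. p < d \<Longrightarrow> xs!p = vs!(a+p)" unfolding xs_def using a by simp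
  have dist: "distinct xs"
    unfolding distinct_conv_nth
  proof (intro allI impI)
    fix p q assume pq: "p < length xs" "q < length xs" "p \<noteq> q"
    show "xs!p \<noteq> xs!q"
    proof
      assume eq: "xs!p = xs!q"
      have "Q (if p < q then q - p else p - q)"
        unfolding Q_def using pq eq nx lx a
        by (cases "p < q") (auto intro!: exI[of _ "a + min p q"])
      from dmin[OF this] pq lx show False by (cases "p < q") auto
    qed
  qed
  have eE: "\<And>r. Suc r < length vs \<Longrightarrow> (vs!r, vs!Suc r) \<in> E" using ep unfolding epath_def by blast
  have d1: "d \<noteq> 1"
  proof
    assume "d = 1"
    hence "(vs!a, vs!a) \<in> E" using eE[of a] a by simp
    thus False using noloops by blast
  qed
  have d2: "d \<noteq> 2"
  proof
    assume "d = 2"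
    moreover have "nbk vs" using W by (simp add: nb_walk_iff)
    ultimately show False using a unfolding nbk_def by (auto simp: numeral_2_eq_2)
  qed
  have d3: "d \<ge> 3" using a(1) d1 d2 by linarith
  define C where "C = comp_rel E `` {vs!a}"
  have inC: "\<And>p. p < d \<Longrightarrow> vs!(a+p) \<in> C"
  proof -
    fix p assume p: "p < d"
    show "vs!(a+p) \<in> C"
    proof (cases "p = 0")
      case True thus ?thesis unfolding C_def comp_rel_def by simp
    next
      case False
      have "(vs!a, vs!(a+p)) \<in> E\<^sup>+" using epath_reach[OF ep, of a "a+p"] False p a by simp
      moreover have "(vs!(a+p), vs!(a+d)) \<in> E\<^sup>+" using epath_reach[OF ep, of "a+p" "a+d"] p a by simp
      ultimately show ?thesis unfolding C_def comp_rel_def using a(3) by simp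
    qed
  qed
  have "cycle_list (und_adj E C) xs"
    unfolding cycle_list_def
  proof (intro conjI allI impI)
    show "3 \<le> length xs" using lx d3 by simp
    show "distinct xs" by (rule dist)
  next
    fix r assume r: "r + 1 < length xs"
    have "xs!r \<noteq> xs!(r+1)" using dist r by (simp add: nth_eq_iff_index_eq)
    moreover have "(xs!r, xs!(r+1)) \<in> E" using eE[of "a+r"] nx[of r] nx[of "r+1"] r lx a by simp
    ultimately show "und_adj E C (xs ! r) (xs ! (r + 1))"
      unfolding und_adj_def using inC[of r] inC[of "r+1"] nx[of r] nx[of "r+1"] r lx by auto
  next
    have xne: "xs \<noteq> []" using lx a by auto
    have l: "last xs = vs!(a+(d-1))" using nx[of "d-1"] lx a xne by (simp add: last_conv_nth)
    have h: "hd xs = vs!(a+0)" using nx[of 0] a xne by (simp add: hd_conv_nth del: add_0_right)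
    have "(vs!(a+(d-1)), vs!(a+d)) \<in> E" using eE[of "a+(d-1)"] a by simp
    moreover have "xs!(d-1) \<noteq> xs!0" using dist lx d3 by (simp add: nth_eq_iff_index_eq)
    moreover have "vs!(a+(d-1)) \<in> C" "vs!(a+0) \<in> C" using inC[of "d-1"] inC[of 0] d3 by auto
    ultimately show "und_adj E C (last xs) (hd xs)"
      unfolding und_adj_def l h using a nx[of 0] nx[of "d-1"] d3 by simp
  qed
  moreover have "C \<in> components E" unfolding C_def by (rule comp_in_components)
  ultimately show ?thesis by (intro bexI exI)
qed


lemma tree_no_cycle:
  assumes "is_tree adj C \<or> is_isolated_node adj C"
  shows "\<not> cycle_list adj xs"
proof
  assume c: "cycle_list adj xs"
  show False using assms
  proof
    assume "is_tree adj C"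
    hence "cycles adj = {}" by (simp add: is_tree_def)
    moreover have "{ys. \<exists>k. ys = rotate k xs \<or> ys = rotate k (rev xs)} \<in> cycles adj"
      unfolding cycles_def using c by blast
    ultimately show False by simp
  next
    assume "is_isolated_node adj C"
    thus False using c by (simp add: is_isolated_node_def cycle_list_def)
  qed
qed

lemma part_a:
  fixes E :: "('n::finite \<times> 'n) set"
  assumes noloops: "\<forall>i. (i, i) \<notin> E"
    and H: "\<forall>C\<in>components E. is_tree (und_adj E C) C \<or> is_isolated_node (und_adj E C) C"
  shows "conv_radius (pk E w) = \<infinity>"
proof -
  have "pk E w k = 0" if k: "k \<ge> CARD('n)" for k
  proof -
    have "{vs. length vs = k + 1 \<and> nb_walk E vs \<and> hd vs = i \<and> last vs = j} = {}" for i j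
    proof (rule ccontr)
      assume "{vs. length vs = k + 1 \<and> nb_walk E vs \<and> hd vs = i \<and> last vs = j} \<noteq> {}"
      then obtain vs where vs: "length vs = k + 1" "nb_walk E vs" by blast
      have "length vs > CARD('n)" using vs k by simp
      from long_walk_cycle[OF noloops vs(2) this] obtain C xs where
        "C \<in> components E" "cycle_list (und_adj E C) xs" by blast
      thus False using H tree_no_cycle by blast
    qed
    hence "\<And>i j. sum (walk_weight w) {vs. length vs = k + 1 \<and> nb_walk E vs \<and> hd vs = i \<and> last vs = j} = 0"
      by (simp only: sum.empty)
    thus ?thesis unfolding pk_def by (simp only: vec_eq_iff vec_lambda_beta zero_index) simp
  qed
  hence "eventually (\<lambda>k. pk E w k = (\<lambda>_. 0) k) sequentially"
    by (intro eventually_sequentiallyI[of "CARD('n)"]) simp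
  hence "conv_radius (pk E w) = conv_radius (\<lambda>_. 0 :: real^'n^'n)" by (rule conv_radius_cong')
  thus ?thesis by simp
qed


definition cycf :: "(int \<Rightarrow> 'n) \<Rightarrow> nat \<Rightarrow> bool" where
  "cycf c L \<longleftrightarrow> L \<ge> 3 \<and> (\<forall>s t. c s = c t \<longleftrightarrow> s mod int L = t mod int L)"

definition cedges :: "('n \<times> 'n) set \<Rightarrow> (int \<Rightarrow> 'n) \<Rightarrow> bool" where
  "cedges R c \<longleftrightarrow> (\<forall>t. (c t, c (t+1)) \<in> R)"

lemma cycf_eq: "cycf c L \<Longrightarrow> c s = c t \<longleftrightarrow> int L dvd (s - t)"
  unfolding cycf_def by (simp add: mod_eq_dvd_iff)

lemma cycf_L: "cycf c L \<Longrightarrow> L \<ge> 3" unfolding cycf_def by simp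

lemma cycf_neq:
  assumes "cycf c L" "d \<noteq> 0" "\<bar>d\<bar> < int L"
  shows "c (s + d) \<noteq> c s"
proof
  assume "c (s + d) = c s"
  hence "int L dvd d" using cycf_eq[OF assms(1)] by simp
  from dvd_imp_le_int[OF assms(2) this] assms(3) show False by simp
qed

lemma cycf_neq2:
  assumes "cycf c L" "d \<noteq> 0" "\<bar>d\<bar> < int L" "s' = s + d"
  shows "c s' \<noteq> c s"
  using cycf_neq[OF assms(1-3)] assms(4) by simp

lemma cycf_basic:
  assumes "cycf c L"
  shows "c (s+1) \<noteq> c s" "c s \<noteq> c (s+1)" "c (s+2) \<noteq> c s" "c (s+1) \<noteq> c (s-1)" "c (s-1) \<noteq> c s"
    "c s \<noteq> c (s - 1)" "c (s - 1) \<noteq> c (s+1)"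
proof -
  have L: "int L \<ge> 3" using cycf_L[OF assms] by simp
  show "c (s+1) \<noteq> c s" using cycf_neq2[OF assms, of 1] L by simp
  thus "c s \<noteq> c (s+1)" by metis
  show "c (s+2) \<noteq> c s" using cycf_neq2[OF assms, of 2] L by simp
  show "c (s+1) \<noteq> c (s-1)" using cycf_neq2[OF assms, of 2 "s+1" "s-1"] L by simp
  thus "c (s - 1) \<noteq> c (s+1)" by metis
  show "c (s-1) \<noteq> c s" using cycf_neq2[OF assms, of "-1"] L by simp
  thus "c s \<noteq> c (s-1)" by metis
qed

lemma cycf_mod: "cycf c L \<Longrightarrow> c (s mod int L) = c s"
  unfolding cycf_def by simp

lemma list_to_cyc:
  assumes d: "distinct xs" and l: "length xs = L" "L \<ge> 3" and ep: "epath R xs"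
    and cl: "(last xs, hd xs) \<in> R"
  shows "cycf (\<lambda>t. xs ! nat (t mod int L)) L \<and> cedges R (\<lambda>t. xs ! nat (t mod int L))"
proof
  have Lp: "int L > 0" using l by simp
  have idx: "nat (t mod int L) < L" for t using Lp by (simp add: nat_less_iff)
  show "cycf (\<lambda>t. xs ! nat (t mod int L)) L"
    unfolding cycf_def
  proof (intro conjI allI)
    show "L \<ge> 3" by (rule l(2))
    fix s t
    have "xs ! nat (s mod int L) = xs ! nat (t mod int L) \<longleftrightarrow> nat (s mod int L) = nat (t mod int L)"
      using d idx l by (simp add: nth_eq_iff_index_eq)
    also have "\<dots> \<longleftrightarrow> s mod int L = t mod int L" using Lp by (simp add: nat_eq_iff2) (metis)
    finally show "xs ! nat (s mod int L) = xs ! nat (t mod int L) \<longleftrightarrow> s mod int L = t mod int L" .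
  qed
  show "cedges R (\<lambda>t. xs ! nat (t mod int L))"
    unfolding cedges_def
  proof
    fix t
    show "(xs ! nat (t mod int L), xs ! nat ((t + 1) mod int L)) \<in> R"
    proof -
      have m1: "(t + 1) mod int L = (t mod int L + 1) mod int L" by (simp add: mod_add_left_eq)
      have m0: "0 \<le> t mod int L" "t mod int L < int L" using Lp by simp_all
      show ?thesis
      proof (cases "t mod int L = int L - 1")
        case True
        hence "(t + 1) mod int L = 0" using m1 by simp
        moreover have "nat (t mod int L) = length xs - 1" using True l by simp
        moreover have "xs \<noteq> []" using l by auto
        ultimately show ?thesis using cl by (simp add: last_conv_nth hd_conv_nth)
      next
        case False
        hence lt: "t mod int L + 1 < int L" using m0 by simp
        have "(t + 1) mod int L = t mod int L + 1"
          using m1 lt m0 by (simp add: mod_pos_pos_trivial)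
        hence "nat ((t + 1) mod int L) = Suc (nat (t mod int L))" using m0 by simp
        thus ?thesis using ep idx[of "t+1"] l(1) unfolding epath_def by simp
      qed
    qed
  qed
qed

definition cwalk :: "(int \<Rightarrow> 'n) \<Rightarrow> int \<Rightarrow> nat \<Rightarrow> 'n list" where
  "cwalk c a n = map (\<lambda>r. c (a + int r)) [0..<Suc n]"

lemma cwalk_length[simp]: "length (cwalk c a n) = Suc n" by (simp add: cwalk_def)
lemma cwalk_nth: "r \<le> n \<Longrightarrow> cwalk c a n ! r = c (a + int r)"
  unfolding cwalk_def by (simp del: upt_Suc add: nth_map_upt)
lemma cwalk_hd[simp]: "hd (cwalk c a n) = c a" by (simp add: cwalk_def del: upt_Suc add: hd_map upt_conv_Cons)
lemma cwalk_last[simp]: "last (cwalk c a n) = c (a + int n)"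
  using cwalk_nth[of n n c a] by (simp add: last_conv_nth del: cwalk_length) (simp add: cwalk_def)

lemma cwalk_nb:
  assumes "cycf c L" "cedges R c"
  shows "nb_walk R (cwalk c a n)"
  unfolding nb_walk_iff epath_def nbk_def
proof (intro conjI allI impI)
  show "cwalk c a n \<noteq> []" by (simp add: cwalk_def)
next
  fix r assume "Suc r < length (cwalk c a n)"
  hence r: "Suc r \<le> n" by simp
  have "(c (a + int r), c (a + int r + 1)) \<in> R" using assms(2) unfolding cedges_def by blast
  thus "(cwalk c a n ! r, cwalk c a n ! Suc r) \<in> R" using r by (simp add: cwalk_nth algebra_simps)
next
  fix r assume "Suc (Suc r) < length (cwalk c a n)"
  hence r: "Suc (Suc r) \<le> n" by simp
  have "c (a + int r + 2) \<noteq> c (a + int r)" by (rule cycf_basic(3)[OF assms(1)])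
  thus "cwalk c a n ! Suc (Suc r) \<noteq> cwalk c a n ! r" using r by (simp add: cwalk_nth algebra_simps)
qed


lemma epath_Cons: "ps \<noteq> [] \<Longrightarrow> epath E (a # ps) \<longleftrightarrow> (a, hd ps) \<in> E \<and> epath E ps"
  by (cases ps) (simp_all add: epath_Cons2)

lemma epath_tl: "epath E (a # ps) \<Longrightarrow> epath E ps"
  unfolding epath_def
proof (intro allI impI)
  fix r assume h: "\<forall>r. Suc r < length (a # ps) \<longrightarrow> ((a # ps) ! r, (a # ps) ! Suc r) \<in> E"
    and r: "Suc r < length ps"
  from h[rule_format, of "Suc r"] r show "(ps ! r, ps ! Suc r) \<in> E" by simp
qed

lemma epath_suffix: "epath E (us @ zs) \<Longrightarrow> epath E zs"
  by (induction us) (auto dest: epath_tl)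

lemma simple_path:
  assumes "(a,b) \<in> E\<^sup>*"
  shows "\<exists>ps. distinct ps \<and> ps \<noteq> [] \<and> hd ps = a \<and> last ps = b \<and> epath E ps"
  using assms
proof (induction rule: converse_rtrancl_induct)
  case base
  show ?case by (intro exI[of _ "[b]"]) (simp add: epath_def)
next
  case (step a y)
  then obtain ps where ps: "distinct ps" "ps \<noteq> []" "hd ps = y" "last ps = b" "epath E ps" by blast
  show ?case
  proof (cases "a \<in> set ps")
    case True
    then obtain us vs where uv: "ps = us @ a # vs" by (meson split_list)
    show ?thesis
    proof (intro exI[of _ "a # vs"] conjI)
      show "distinct (a # vs)" using ps(1) uv by simp
      show "last (a # vs) = b" using ps(4) uv by simp
      show "epath E (a # vs)" using ps(5) uv epath_suffix by blast
    qed simp_all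
  next
    case False
    show ?thesis
    proof (intro exI[of _ "a # ps"] conjI)
      show "distinct (a # ps)" using ps(1) False by simp
      show "last (a # ps) = b" using ps(2,4) by simp
      show "epath E (a # ps)" using ps(2,3,5) step(1) by (simp add: epath_Cons)
    qed simp_all
  qed
qed

lemma epath_reach_rt:
  assumes "epath E W" "i \<le> j" "j < length W"
  shows "(W!i, W!j) \<in> E\<^sup>*"
proof (cases "i = j")
  case False
  hence "(W!i, W!j) \<in> E\<^sup>+" using epath_reach[OF assms(1)] assms(2,3) by simp
  thus ?thesis by simp
qed simp

lemma comp_form: "C \<in> components E \<Longrightarrow> \<exists>x. C = comp_rel E `` {x}"
  unfolding components_def by (auto elim!: quotientE)

lemma comp_pair:
  assumes "C \<in> components E" "a \<in> C" "b \<in> C" "a \<noteq> b"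
  shows "(a,b) \<in> E\<^sup>+ \<and> (b,a) \<in> E\<^sup>+"
proof -
  obtain x where x: "C = comp_rel E `` {x}" using comp_form[OF assms(1)] by blast
  have xa: "x = a \<or> ((x,a) \<in> E\<^sup>+ \<and> (a,x) \<in> E\<^sup>+)" using assms(2) x unfolding comp_rel_def by auto
  have xb: "x = b \<or> ((x,b) \<in> E\<^sup>+ \<and> (b,x) \<in> E\<^sup>+)" using assms(3) x unfolding comp_rel_def by auto
  show ?thesis using xa xb assms(4) by (auto intro: trancl_trans)
qed

lemma comp_closed:
  assumes "C \<in> components E" "a \<in> C" "(a,y) \<in> E\<^sup>*" "(y,a) \<in> E\<^sup>*"
  shows "y \<in> C"
proof (cases "y = a")
  case True thus ?thesis using assms(2) by simp
next
  case False
  have ay: "(a,y) \<in> E\<^sup>+" "(y,a) \<in> E\<^sup>+" using assms(3,4) False by (auto simp: rtrancl_eq_or_trancl)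
  obtain x where x: "C = comp_rel E `` {x}" using comp_form[OF assms(1)] by blast
  have xa: "x = a \<or> ((x,a) \<in> E\<^sup>+ \<and> (a,x) \<in> E\<^sup>+)" using assms(2) x unfolding comp_rel_def by auto
  have "x = y \<or> ((x,y) \<in> E\<^sup>+ \<and> (y,x) \<in> E\<^sup>+)" using xa ay by (auto intro: trancl_trans)
  thus ?thesis using x unfolding comp_rel_def by auto
qed

lemma cycle_list_inC:
  assumes "cycle_list (und_adj E C) xs"
  shows "set xs \<subseteq> C"
proof
  fix y assume "y \<in> set xs"
  then obtain r where r: "r < length xs" "xs!r = y" by (auto simp: in_set_conv_nth)
  have cl: "length xs \<ge> 3" "\<And>r. r + 1 < length xs \<Longrightarrow> und_adj E C (xs ! r) (xs ! (r + 1))"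
    "und_adj E C (last xs) (hd xs)" using assms unfolding cycle_list_def by blast+
  show "y \<in> C"
  proof (cases "r + 1 < length xs")
    case True thus ?thesis using cl(2)[OF True] r unfolding und_adj_def by simp
  next
    case False
    hence "r = length xs - 1" using r by simp
    moreover have "xs \<noteq> []" using cl(1) by (cases xs) auto
    ultimately have "y = last xs" using r by (simp add: last_conv_nth)
    thus ?thesis using cl(3) unfolding und_adj_def by simp
  qed
qed

lemma cycle_to_dcyc:
  assumes noloops: "\<forall>i. (i, i) \<notin> E"
    and C: "C \<in> components E" and cyc: "cycle_list (und_adj E C) xs"
  shows "\<exists>c L. cycf c L \<and> cedges E c \<and> (\<forall>t. c t \<in> C)"
proof -
  have cl: "length xs \<ge> 3" "distinct xs" "\<And>r. r + 1 < length xs \<Longrightarrow> und_adj E C (xs ! r) (xs ! (r + 1))"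
    "und_adj E C (last xs) (hd xs)" using cyc unfolding cycle_list_def by blast+
  have sC: "set xs \<subseteq> C" by (rule cycle_list_inC[OF cyc])
  show ?thesis
  proof (cases "(\<forall>r. r + 1 < length xs \<longrightarrow> (xs!r, xs!(r+1)) \<in> E) \<and> (last xs, hd xs) \<in> E")
    case True
    have ep: "epath E xs" using True unfolding epath_def by simp
    from list_to_cyc[OF cl(2) refl cl(1) ep] True
    have cc: "cycf (\<lambda>t. xs ! nat (t mod int (length xs))) (length xs)"
      "cedges E (\<lambda>t. xs ! nat (t mod int (length xs)))" by blast+
    have "\<forall>t. xs ! nat (t mod int (length xs)) \<in> C"
    proof
      fix t
      have "int (length xs) > 0" using cl(1) by linarith
      hence "nat (t mod int (length xs)) < length xs" by (simp add: nat_less_iff)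
      thus "xs ! nat (t mod int (length xs)) \<in> C" using sC nth_mem by blast
    qed
    thus ?thesis using cc by blast
  next
    case False
    obtain a b where ab: "und_adj E C a b" "(a,b) \<notin> E"
      using False cl(3,4) by blast
    have abC: "a \<in> C" "b \<in> C" "a \<noteq> b" "(b,a) \<in> E" using ab unfolding und_adj_def by auto
    have "(a,b) \<in> E\<^sup>+" using comp_pair[OF C abC(1-3)] by blast
    hence "(a,b) \<in> E\<^sup>*" by simp
    from simple_path[OF this] obtain ps where ps: "distinct ps" "ps \<noteq> []" "hd ps = a" "last ps = b" "epath E ps"
      by blast
    have l3: "length ps \<ge> 3"
    proof (rule ccontr)
      assume "\<not> length ps \<ge> 3"
      moreover have "length ps \<noteq> 1" using ps abC(3) by (cases ps) auto
      moreover have "length ps \<noteq> 0" using ps by simp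
      ultimately have "length ps = 2" by linarith
      then obtain u v where "ps = [u, v]" by (cases ps; cases "tl ps") auto
      thus False using ps ab(2) by (simp add: epath_Cons2)
    qed
    from list_to_cyc[OF ps(1) refl l3 ps(5)] ps abC(4)
    have cc: "cycf (\<lambda>t. ps ! nat (t mod int (length ps))) (length ps)"
      "cedges E (\<lambda>t. ps ! nat (t mod int (length ps)))" by auto
    have inC: "ps ! r \<in> C" if r: "r < length ps" for r
    proof -
      have "(ps!0, ps!r) \<in> E\<^sup>*" using epath_reach_rt[OF ps(5), of 0 r] r by simp
      hence 1: "(a, ps!r) \<in> E\<^sup>*" using ps by (simp add: hd_conv_nth)
      have "(ps!r, ps!(length ps - 1)) \<in> E\<^sup>*" using epath_reach_rt[OF ps(5), of r "length ps - 1"] r by simp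
      hence "(ps!r, b) \<in> E\<^sup>*" using ps by (simp add: last_conv_nth)
      hence 2: "(ps!r, a) \<in> E\<^sup>*" using abC(4) by simp
      show ?thesis by (rule comp_closed[OF C abC(1) 1 2])
    qed
    have "\<forall>t. ps ! nat (t mod int (length ps)) \<in> C"
    proof
      fix t
      have "int (length ps) > 0" using l3 by linarith
      hence "nat (t mod int (length ps)) < length ps" by (simp add: nat_less_iff)
      thus "ps ! nat (t mod int (length ps)) \<in> C" by (rule inC)
    qed
    thus ?thesis using cc by blast
  qed
qed

lemma sigma_props:
  fixes E :: "('n::finite \<times> 'n) set"
  assumes wpos: "\<forall>e\<in>E. w e > 0" and ex: "(a0,b0) \<in> E" "(b0,c0) \<in> E" "c0 \<noteq> a0"
  shows "sigma_min E w > 0"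
    "\<And>a b c. (a,b) \<in> E \<Longrightarrow> (b,c) \<in> E \<Longrightarrow> c \<noteq> a \<Longrightarrow> sqrt (w (a,b) * w (b,c)) \<ge> sigma_min E w"
proof -
  define Sg where "Sg = {hashimoto_sqrt E w e f | e f. e \<in> E \<and> f \<in> E \<and> hashimoto_sqrt E w e f > 0}"
  have sm: "sigma_min E w = Min Sg" unfolding sigma_min_def Sg_def by simp
  have fin: "finite Sg"
  proof -
    have "Sg \<subseteq> (\<lambda>p. hashimoto_sqrt E w (fst p) (snd p)) ` (E \<times> E)"
    proof
      fix x assume "x \<in> Sg"
      then obtain e f where "x = hashimoto_sqrt E w e f" "e \<in> E" "f \<in> E" unfolding Sg_def by blast
      thus "x \<in> (\<lambda>p. hashimoto_sqrt E w (fst p) (snd p)) ` (E \<times> E)"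
        by (intro image_eqI[of _ _ "(e,f)"]) simp_all
    qed
    moreover have "finite E" by (rule finite)
    hence "finite ((\<lambda>p. hashimoto_sqrt E w (fst p) (snd p)) ` (E \<times> E))"
        by (intro finite_imageI finite_cartesian_product)
    ultimately show ?thesis by (rule finite_subset)
  qed
  have mem: "sqrt (w (a,b) * w (b,c)) \<in> Sg" if "(a,b) \<in> E" "(b,c) \<in> E" "c \<noteq> a" for a b c
  proof -
    have h: "hashimoto_sqrt E w (a,b) (b,c) = sqrt (w (a,b) * w (b,c))"
      using that unfolding hashimoto_sqrt_def by simp
    have "hashimoto_sqrt E w (a,b) (b,c) > 0" using that wpos h by simp
    hence "hashimoto_sqrt E w (a,b) (b,c) \<in> Sg" unfolding Sg_def using that by blast
    thus ?thesis using h by simp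
  qed
  show "\<And>a b c. (a,b) \<in> E \<Longrightarrow> (b,c) \<in> E \<Longrightarrow> c \<noteq> a \<Longrightarrow> sqrt (w (a,b) * w (b,c)) \<ge> sigma_min E w"
    unfolding sm by (rule Min_le[OF fin mem])
  have ne: "Sg \<noteq> {}" using mem[OF ex] by blast
  have "Min Sg \<in> Sg" using fin ne by (rule Min_in)
  moreover have "\<And>x. x \<in> Sg \<Longrightarrow> x > 0" unfolding Sg_def by blast
  ultimately show "sigma_min E w > 0" unfolding sm by blast
qed

lemma conv_radius_le_bound:
  fixes f :: "nat \<Rightarrow> 'a::banach"
  assumes K: "K > 0" and c: "c > 0" and l: "l > 0"
    and bnd: "\<And>m. m \<ge> 1 \<Longrightarrow> norm (f (m*K)) \<ge> c * l^(m*K)"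
  shows "conv_radius f \<le> ereal (1/l)"
proof -
  define X where "X = (\<lambda>n. ereal (root n (norm (f n))))"
  define r where "r = (\<lambda>m::nat. (m+1)*K)"
  have sm: "strict_mono r" unfolding r_def using K by (intro strict_monoI) auto
  have h: "(\<lambda>m. ereal (l * root (r m) c)) \<longlonglongrightarrow> ereal (l * 1)"
  proof (intro tendsto_ereal tendsto_mult tendsto_const)
    have "filterlim r at_top at_top" using sm by (rule filterlim_subseq)
    from filterlim_compose[OF LIMSEQ_root_const[OF c] this]
    show "(\<lambda>m. root (r m) c) \<longlonglongrightarrow> 1" by (simp add: o_def)
  qed
  have ev: "\<forall>\<^sub>F m in sequentially. ereal (l * root (r m) c) \<le> (X \<circ> r) m"
  proof (intro always_eventually allI)
    fix m
    have rp: "r m > 0" using K unfolding r_def by simp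
    have "l * root (r m) c = root (r m) (c * l ^ r m)"
      using rp l c by (simp add: real_root_mult real_root_pos2)
    also have "\<dots> \<le> root (r m) (norm (f (r m)))"
      using bnd[of "m+1"] rp unfolding r_def by (simp)
    finally show "ereal (l * root (r m) c) \<le> (X \<circ> r) m" by (simp add: X_def)
  qed
  have "ereal l = limsup (\<lambda>m. ereal (l * root (r m) c))"
    using lim_imp_Limsup[OF _ h] by simp
  also have "\<dots> \<le> limsup (X \<circ> r)" by (rule Limsup_mono[OF ev])
  also have "\<dots> \<le> limsup X" by (rule limsup_subseq_mono[OF sm])
  finally have "ereal l \<le> limsup X" .
  hence "inverse (limsup X) \<le> inverse (ereal l)"
    using l by (intro ereal_inverse_antimono) auto
  thus ?thesis using l unfolding conv_radius_def X_def by (simp add: divide_inverse)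
qed

lemma radius_walks:
  fixes E :: "('n::finite \<times> 'n) set"
  assumes wpos: "\<forall>e\<in>E. w e > 0" and K: "K > 0" and beta: "\<beta> \<ge> 1" and sg: "sg > 0"
    and V: "\<And>a b c. (a,b) \<in> E \<Longrightarrow> (b,c) \<in> E \<Longrightarrow> c \<noteq> a \<Longrightarrow> sqrt (w (a,b) * w (b,c)) \<ge> sg"
    and wm: "wmin > 0" "\<forall>e\<in>E. w e \<ge> wmin"
    and fam: "\<And>m. m \<ge> 1 \<Longrightarrow> \<exists>v T. T \<subseteq> {vs. length vs = m*K + 1 \<and> nb_walk E vs \<and> hd vs = v \<and> last vs = v}
                     \<and> real (card T) \<ge> \<beta>^m"
  shows "conv_radius (pk E w) \<le> ereal (1 / (root K \<beta> * sg))"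
proof (rule conv_radius_le_bound[OF K])
  show "wmin / sg > 0" using wm sg by simp
  show "root K \<beta> * sg > 0" using K beta sg by simp
  fix m :: nat assume m: "m \<ge> 1"
  obtain v T where T: "T \<subseteq> {vs. length vs = m*K + 1 \<and> nb_walk E vs \<and> hd vs = v \<and> last vs = v}"
    "real (card T) \<ge> \<beta>^m" using fam[OF m] by blast
  have fT: "finite T" by (rule finite_subset[OF T(1) finite_walkset])
  have mK: "m * K \<ge> 1" using m K by simp
  have wb: "walk_weight w vs \<ge> wmin * sg ^ (m*K - 1)" if "vs \<in> T" for vs
  proof -
    have "nb_walk E vs" "length vs = (m*K - 1) + 2" using T(1) that mK by auto
    thus ?thesis using walk_weight_bound[OF wm(1,2) _ V] sg by simp
  qed
  have rK: "root K \<beta> ^ K = \<beta>" using K beta by (simp add: real_root_pow_pos2)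
  have p1: "(root K \<beta> * sg) ^ (m*K) = (root K \<beta>) ^ (K*m) * sg ^ (m*K)"
    by (simp only: power_mult_distrib mult.commute[of m K])
  have p2: "(root K \<beta>) ^ (K*m) = \<beta> ^ m" by (simp only: power_mult rK)
  have p3: "sg ^ (m*K) = sg * sg ^ (m*K - 1)"
  proof -
    have "m*K = Suc (m*K - 1)" using mK by simp
    hence "sg ^ (m*K) = sg ^ Suc (m*K - 1)" by (rule arg_cong)
    thus ?thesis by simp
  qed
  have "(wmin / sg) * (root K \<beta> * sg) ^ (m*K) = \<beta> ^ m * (wmin * sg ^ (m*K - 1))"
    unfolding p1 p2 p3 using sg by (simp add: field_simps)
  also have "\<dots> \<le> real (card T) * (wmin * sg ^ (m*K - 1))"
    using T(2) wm sg by (intro mult_right_mono) auto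
  also have "\<dots> \<le> sum (walk_weight w) T"
    using wb by (metis sum_bounded_below)
  also have "\<dots> \<le> pk E w (m*K) $ v $ v" by (rule pk_ge[OF wpos T(1)])
  also have "\<dots> \<le> norm (pk E w (m*K))" using norm_pk_ge[of E w "m*K" v v] by simp
  finally show "norm (pk E w (m*K)) \<ge> (wmin / sg) * (root K \<beta> * sg) ^ (m*K)" .
qed


fun catw :: "'n \<Rightarrow> 'n list list \<Rightarrow> 'n list" where
  "catw v [] = [v]"
| "catw v (B # Bs) = B @ tl (catw v Bs)"

definition goodF :: "('n \<times> 'n) set \<Rightarrow> 'n \<Rightarrow> 'n list set \<Rightarrow> bool" where
  "goodF E v F \<longleftrightarrow> (\<forall>B\<in>F. nb_walk E B \<and> hd B = v \<and> last B = v \<and> length B \<ge> 2) \<and>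
                    (\<forall>B\<in>F. \<forall>B'\<in>F. B ! (length B - 2) \<noteq> B' ! 1)"

lemma catw_props:
  assumes g: "goodF E v F" and BF: "set Bs \<subseteq> F"
  shows "nb_walk E (catw v Bs) \<and> hd (catw v Bs) = v \<and> last (catw v Bs) = v
       \<and> length (catw v Bs) = 1 + (\<Sum>B\<leftarrow>Bs. length B - 1)
       \<and> (Bs \<noteq> [] \<longrightarrow> catw v Bs ! 1 = hd Bs ! 1
            \<and> catw v Bs ! (length (catw v Bs) - 2) = last Bs ! (length (last Bs) - 2))"
  using BF
proof (induction Bs)
  case Nil thus ?case by simp
next
  case (Cons B Bs)
  have BinF: "B \<in> F" using Cons.prems by simp
  have gB: "nb_walk E B" "hd B = v" "last B = v" "length B \<ge> 2" using g BinF unfolding goodF_def by blast+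
  define R where "R = catw v Bs"
  have IH: "nb_walk E R" "hd R = v" "last R = v" "length R = 1 + (\<Sum>B\<leftarrow>Bs. length B - 1)"
    "Bs \<noteq> [] \<Longrightarrow> R ! 1 = hd Bs ! 1 \<and> R ! (length R - 2) = last Bs ! (length (last Bs) - 2)"
    using Cons.IH Cons.prems unfolding R_def by auto
  have Rne: "R \<noteq> []" using IH(1) by auto
  have lenR2: "Bs \<noteq> [] \<Longrightarrow> length R \<ge> 2"
  proof -
    assume "Bs \<noteq> []"
    then obtain B' Bs' where "Bs = B' # Bs'" by (cases Bs) auto
    moreover have "B' \<in> F" using Cons.prems \<open>Bs = B' # Bs'\<close> by simp
    hence "length B' \<ge> 2" using g unfolding goodF_def by blast
    ultimately show "length R \<ge> 2" using IH(4) by simp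
  qed
  have nb: "nb_walk E (B @ tl R)"
  proof (rule nb_append[OF gB(1) IH(1)])
    show "last B = hd R" using gB IH by simp
    assume "length B \<ge> 2" "length R \<ge> 2"
    hence "Bs \<noteq> []" using IH(4) by auto
    hence "R ! 1 = hd Bs ! 1" using IH(5) by blast
    moreover have "hd Bs \<in> F" using Cons.prems \<open>Bs \<noteq> []\<close> by (cases Bs) auto
    ultimately show "B ! (length B - 2) \<noteq> R ! 1" using g BinF unfolding goodF_def by simp
  qed
  have hd: "hd (B @ tl R) = v" using gB by (cases B) auto
  have last: "last (B @ tl R) = v"
    using gB IH(3) Rne by (cases "tl R = []") (auto simp: last_tl)
  have len: "length (B @ tl R) = 1 + (\<Sum>B\<leftarrow>B # Bs. length B - 1)" using gB(4) IH(4) by simp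
  have i1: "(B @ tl R) ! 1 = B ! 1" using gB(4) by (simp add: nth_append)
  have i2: "(B @ tl R) ! (length (B @ tl R) - 2) = last (B # Bs) ! (length (last (B # Bs)) - 2)"
  proof (cases "Bs = []")
    case True
    hence "R = [v]" unfolding R_def by simp
    thus ?thesis using True by simp
  next
    case False
    have lR: "length R \<ge> 2" using lenR2[OF False] .
    have "(B @ tl R) ! (length (B @ tl R) - 2) = R ! (length R - 2)"
    proof (cases "length R = 2")
      case True
      have lt: "length B - 1 < length B" using gB(4) by simp
      have "length (B @ tl R) - 2 = length B - 1" using True gB(4) by simp
      hence "(B @ tl R) ! (length (B @ tl R) - 2) = B ! (length B - 1)"
        using lt by (simp only: nth_append if_True)
      also have "\<dots> = last B" using gB(4) by (cases B) (auto simp: last_conv_nth)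
      also have "\<dots> = R ! 0" using gB(3) IH(2) Rne by (simp add: hd_conv_nth)
      finally show ?thesis using True by simp
    next
      case False
      hence lR3: "length R \<ge> 3" using lR by simp
      have "length (B @ tl R) - 2 = length B + (length R - 3)" using lR3 gB(4) by simp
      hence "(B @ tl R) ! (length (B @ tl R) - 2) = tl R ! (length R - 3)"
        by (simp only: nth_append_length_plus)
      also have "\<dots> = R ! Suc (length R - 3)" using lR3 Rne by (simp add: nth_tl)
      also have "Suc (length R - 3) = length R - 2" using lR3 by linarith
      finally show ?thesis .
    qed
    also have "\<dots> = last Bs ! (length (last Bs) - 2)" using IH(5)[OF False] by blast
    finally show ?thesis using False by simp
  qed
  show ?case using nb hd last len i1 i2 unfolding R_def by simp
qed

lemma catw_ne: "(\<forall>B\<in>set Bs. B \<noteq> []) \<Longrightarrow> catw v Bs \<noteq> []"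
  by (induction Bs) auto

lemma catw_inj:
  assumes lU: "length U = length W" and UW: "U \<noteq> W" and hU: "hd (catw v []) = v"
    and nU: "\<forall>B\<in>{U,W}. B \<noteq> [] \<and> hd B = v"
  shows "catw v (map f bs) = catw v (map f bs') \<Longrightarrow> length bs = length bs' \<Longrightarrow>
         (\<forall>b. f b \<in> {U, W}) \<Longrightarrow> (\<forall>b b'. f b = f b' \<longrightarrow> b = b') \<Longrightarrow> bs = bs'"
proof (induction bs arbitrary: bs')
  case Nil thus ?case by simp
next
  case (Cons b bs)
  obtain b' bs'' where bs': "bs' = b' # bs''" using Cons.prems(2) by (cases bs') auto
  have eq: "f b @ tl (catw v (map f bs)) = f b' @ tl (catw v (map f bs''))"
    using Cons.prems(1) bs' by simp
  have "length (f b) = length (f b')" using Cons.prems(3) lU by (metis insertE singletonD)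
  hence "f b = f b' \<and> tl (catw v (map f bs)) = tl (catw v (map f bs''))"
    using eq by (simp add: append_eq_append_conv)
  hence fb: "f b = f b'" and tl: "tl (catw v (map f bs)) = tl (catw v (map f bs''))" by blast+
  have hdv: "hd (catw v (map f xs)) = v" for xs
  proof (cases xs)
    case Nil thus ?thesis by simp
  next
    case (Cons x xs')
    have "f x \<noteq> [] \<and> hd (f x) = v" using nU Cons.prems(3) by blast
    thus ?thesis using Cons by (cases "f x") auto
  qed
  have "catw v (map f bs) = catw v (map f bs'')"
  proof -
    have ne: "\<forall>B\<in>set (map f xs). B \<noteq> []" for xs using nU Cons.prems(3) by auto
    show ?thesis
    using tl hdv[of bs] hdv[of bs''] catw_ne[OF ne[of bs], of v] catw_ne[OF ne[of bs''], of v]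
    by (metis list.collapse)
  qed
  hence "bs = bs''" using Cons.IH Cons.prems bs' by simp
  thus ?case using fb Cons.prems(4) bs' by blast
qed


lemma app2:
  assumes X: "nb_walk E X" "hd X = v" "last X = v" "length X \<ge> 2"
    and Y: "nb_walk E Y" "hd Y = v" "last Y = v" "length Y \<ge> 2"
    and j: "X ! (length X - 2) \<noteq> Y ! 1"
  shows "nb_walk E (X @ tl Y) \<and> hd (X @ tl Y) = v \<and> last (X @ tl Y) = v
     \<and> length (X @ tl Y) = length X + length Y - 1 \<and> (X @ tl Y) ! 1 = X ! 1
     \<and> (X @ tl Y) ! (length (X @ tl Y) - 2) = Y ! (length Y - 2)
     \<and> (X @ tl Y) ! (length X) = Y ! 1"
proof -
  have Yne: "Y \<noteq> []" "tl Y \<noteq> []" using Y(4) by (cases Y; cases "tl Y"; auto)+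
  have nb: "nb_walk E (X @ tl Y)" by (rule nb_append[OF X(1) Y(1)]) (use X Y j in auto)
  have hd: "hd (X @ tl Y) = v" using X(2,4) by (cases X) auto
  have last: "last (X @ tl Y) = v" using Y(3) Yne by (simp add: last_tl)
  have len: "length (X @ tl Y) = length X + length Y - 1" using Y(4) by simp
  have i1: "(X @ tl Y) ! 1 = X ! 1" using X(4) by (simp add: nth_append)
  have i3: "(X @ tl Y) ! (length X) = Y ! 1"
    using nth_append_length_plus[of X "tl Y" 0] Y(4) by (cases Y) auto
  have i2: "(X @ tl Y) ! (length (X @ tl Y) - 2) = Y ! (length Y - 2)"
  proof (cases "length Y = 2")
    case True
    have lt: "length X - 1 < length X" using X(4) by simp
    have "length (X @ tl Y) - 2 = length X - 1" using True X(4) by simp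
    hence "(X @ tl Y) ! (length (X @ tl Y) - 2) = X ! (length X - 1)"
      using lt by (simp only: nth_append if_True)
    also have "\<dots> = last X" using X(4) by (cases X) (auto simp: last_conv_nth)
    also have "\<dots> = Y ! 0" using X(3) Y(2) Yne by (simp add: hd_conv_nth)
    finally show ?thesis using True by simp
  next
    case False
    hence lY3: "length Y \<ge> 3" using Y(4) by simp
    have "length (X @ tl Y) - 2 = length X + (length Y - 3)" using lY3 X(4) by simp
    hence "(X @ tl Y) ! (length (X @ tl Y) - 2) = tl Y ! (length Y - 3)"
      by (simp only: nth_append_length_plus)
    also have "\<dots> = Y ! Suc (length Y - 3)" using lY3 Yne by (simp add: nth_tl)
    also have "Suc (length Y - 3) = length Y - 2" using lY3 by linarith
    finally show ?thesis .
  qed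
  show ?thesis using nb hd last len i1 i2 i3 by blast
qed

lemma branch_radius:
  fixes E :: "('n::finite \<times> 'n) set"
  assumes wpos: "\<forall>e\<in>E. w e > 0" and sg: "sg > 0"
    and V: "\<And>a b c. (a,b) \<in> E \<Longrightarrow> (b,c) \<in> E \<Longrightarrow> c \<noteq> a \<Longrightarrow> sqrt (w (a,b) * w (b,c)) \<ge> sg"
    and wm: "wmin > 0" "\<forall>e\<in>E. w e \<ge> wmin"
    and X: "nb_walk E X" "hd X = v" "last X = v" "length X \<ge> 2"
    and Y: "nb_walk E Y" "hd Y = v" "last Y = v" "length Y \<ge> 2"
    and j1: "X ! (length X - 2) \<noteq> X ! 1" and j2: "X ! (length X - 2) \<noteq> Y ! 1"
    and j3: "Y ! (length Y - 2) \<noteq> X ! 1" and d: "X ! 1 \<noteq> Y ! 1"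
  shows "conv_radius (pk E w) < ereal (1 / sg)"
proof -
  define a where "a = length X - 1"
  define b where "b = length Y - 1"
  have a1: "a \<ge> 1" "length X = a + 1" using X(4) unfolding a_def by auto
  have b1: "b \<ge> 1" "length Y = b + 1" using Y(4) unfolding b_def by auto
  define Z where "Z = X @ tl Y"
  note ZZ = app2[OF X Y j2, folded Z_def]
  have Zp: "nb_walk E Z" "hd Z = v" "last Z = v" "length Z = a + b + 1" "Z ! 1 = X ! 1"
    "Z ! (length Z - 2) = Y ! (length Y - 2)" "Z ! (a + 1) = Y ! 1"
    using ZZ a1 b1 by auto
  have g1: "goodF E v {X, Z}"
    unfolding goodF_def using X Zp j1 j3 a1 b1 by auto
  define U where "U = catw v (replicate (a+b) X)"
  define W where "W = catw v (replicate a Z)"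
  have sU: "set (replicate (a+b) X) \<subseteq> {X, Z}" "set (replicate a Z) \<subseteq> {X, Z}" by auto
  note PU = catw_props[OF g1 sU(1), folded U_def]
  note PW = catw_props[OF g1 sU(2), folded W_def]
  have ne: "replicate (a+b) X \<noteq> []" "replicate a Z \<noteq> []" using a1 by auto
  have sl: "(\<Sum>B\<leftarrow>replicate n B0. length B - 1) = n * (length B0 - 1)" for n and B0 :: "'n list"
    by (induction n) auto
  define K where "K = a * (a + b)"
  have K1: "K \<ge> 1" using a1 b1 unfolding K_def by simp
  have Up: "nb_walk E U" "hd U = v" "last U = v" "length U = K + 1" "U ! 1 = X ! 1"
    "U ! (length U - 2) = X ! (length X - 2)"
    using PU ne(1) a1 sl[of "a+b" X] unfolding K_def by (auto simp: last_replicate)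
  have Wp: "nb_walk E W" "hd W = v" "last W = v" "length W = K + 1" "W ! 1 = X ! 1"
    "W ! (length W - 2) = Y ! (length Y - 2)"
    using PW ne(2) a1 b1 Zp sl[of a Z] unfolding K_def by (auto simp: last_replicate)
  have UW: "U \<noteq> W"
  proof -
    define R where "R = catw v (replicate (a+b-1) X)"
    have "replicate (a+b) X = X # replicate (a+b-1) X" using a1 b1 by (cases "a+b") auto
    hence Ueq: "U = X @ tl R" unfolding U_def R_def by simp
    have sR: "set (replicate (a+b-1) X) \<subseteq> {X, Z}" by auto
    have neR: "replicate (a+b-1) X \<noteq> []" using a1 b1 by simp
    have PR: "R ! 1 = X ! 1" "hd R = v" "last R = v" "nb_walk E R"
      using catw_props[OF g1 sR] neR unfolding R_def by auto
    have lR: "length R \<ge> 2"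
    proof -
      have "length R = 1 + (a+b-1) * (length X - 1)"
        using catw_props[OF g1 sR] sl[of "a+b-1" X] unfolding R_def by simp
      thus ?thesis using a1 b1 by simp
    qed
    have "U ! (a + 1) = X ! 1"
    proof -
      have "U ! (a + 1) = (X @ tl R) ! (length X + 0)" using Ueq a1 by simp
      also have "\<dots> = tl R ! 0" by (rule nth_append_length_plus)
      also have "\<dots> = R ! 1" using lR by (cases R) auto
      finally show ?thesis using PR by simp
    qed
    moreover have "W ! (a + 1) = Y ! 1"
    proof -
      have "replicate a Z = Z # replicate (a-1) Z" using a1 by (cases a) auto
      hence "W = Z @ tl (catw v (replicate (a-1) Z))" unfolding W_def by simp
      moreover have "a + 1 < length Z" using Zp b1 by simp
      ultimately have "W ! (a+1) = Z ! (a+1)" by (simp add: nth_append)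
      thus ?thesis using Zp by simp
    qed
    ultimately show ?thesis using d by auto
  qed
  have g2: "goodF E v {U, W}"
    unfolding goodF_def using Up Wp j1 j3 K1 by auto
  define blk where "blk = (\<lambda>bb::bool. if bb then U else W)"
  have "conv_radius (pk E w) \<le> ereal (1 / (root K 2 * sg))"
  proof (rule radius_walks[OF wpos _ _ sg V wm])
    show "K > 0" using K1 by simp
    show "(1::real) \<le> 2" by simp
    fix m :: nat assume m: "m \<ge> 1"
    define T where "T = (\<lambda>bs. catw v (map blk bs)) ` {bs. length bs = m}"
    have sub: "T \<subseteq> {vs. length vs = m*K + 1 \<and> nb_walk E vs \<and> hd vs = v \<and> last vs = v}"
    proof
      fix vs assume "vs \<in> T"
      then obtain bs where bs: "length bs = m" "vs = catw v (map blk bs)" unfolding T_def by blast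
      have s: "set (map blk bs) \<subseteq> {U, W}" unfolding blk_def by auto
      note P = catw_props[OF g2 s]
      have "map (\<lambda>B. length B - 1) (map blk bs) = map (\<lambda>_. K) bs"
        unfolding blk_def using Up(4) Wp(4) by auto
      hence "(\<Sum>B\<leftarrow>map blk bs. length B - 1) = m * K"
        using bs(1) by (simp add: map_replicate_const sum_list_replicate)
      thus "vs \<in> {vs. length vs = m*K + 1 \<and> nb_walk E vs \<and> hd vs = v \<and> last vs = v}"
        using P bs by simp
    qed
    have inj: "inj_on (\<lambda>bs. catw v (map blk bs)) {bs. length bs = m}"
    proof (rule inj_onI)
      fix bs bs' assume h: "bs \<in> {bs. length bs = m}" "bs' \<in> {bs. length bs = m}"
        "catw v (map blk bs) = catw v (map blk bs')"
      show "bs = bs'"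
      proof (rule catw_inj[where U=U and W=W and v=v and f=blk])
        show "length U = length W" using Up Wp by simp
        show "U \<noteq> W" by (rule UW)
        show "hd (catw v []) = v" by simp
        show "\<forall>B\<in>{U, W}. B \<noteq> [] \<and> hd B = v" using Up Wp by auto
        show "catw v (map blk bs) = catw v (map blk bs')" by (rule h(3))
        show "length bs = length bs'" using h by simp
        show "\<forall>b. blk b \<in> {U, W}" unfolding blk_def by simp
        show "\<forall>b b'. blk b = blk b' \<longrightarrow> b = b'" unfolding blk_def using UW by auto
      qed
    qed
    have "card {bs::bool list. length bs = m} = 2 ^ m"
      using card_lists_length_eq[of "UNIV :: bool set" m] by simp
    hence "card T = 2 ^ m" unfolding T_def using card_image[OF inj] by simp
    thus "\<exists>v T. T \<subseteq> {vs. length vs = m*K + 1 \<and> nb_walk E vs \<and> hd vs = v \<and> last vs = v}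
                     \<and> (2::real) ^ m \<le> real (card T)"
      using sub by (intro exI[of _ v] exI[of _ T]) simp
  qed
  moreover have "1 / (root K 2 * sg) < 1 / sg"
  proof -
    have "root K 2 > 1" using K1 by simp
    hence "sg < root K 2 * sg" using sg by simp
    thus ?thesis using sg by (simp add: divide_strict_left_mono)
  qed
  hence "ereal (1 / (root K 2 * sg)) < ereal (1 / sg)" by simp
  ultimately show ?thesis by (rule le_less_trans)
qed


lemma app_idx:
  assumes X: "length X \<ge> 2" and Y: "length Y \<ge> 2" and j: "last X = hd Y"
  shows "(X @ tl Y) ! 1 = X ! 1 \<and> (X @ tl Y) ! (length (X @ tl Y) - 2) = Y ! (length Y - 2)
     \<and> length (X @ tl Y) = length X + length Y - 1 \<and> last (X @ tl Y) = last Y \<and> hd (X @ tl Y) = hd X"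
proof -
  have Yne: "Y \<noteq> []" "tl Y \<noteq> []" using Y by (cases Y; cases "tl Y"; auto)+
  have last: "last (X @ tl Y) = last Y" using Yne by (simp add: last_tl)
  have hd: "hd (X @ tl Y) = hd X" using X by (cases X) auto
  have len: "length (X @ tl Y) = length X + length Y - 1" using Y by simp
  have i1: "(X @ tl Y) ! 1 = X ! 1" using X by (simp add: nth_append)
  have i2: "(X @ tl Y) ! (length (X @ tl Y) - 2) = Y ! (length Y - 2)"
  proof (cases "length Y = 2")
    case True
    have lt: "length X - 1 < length X" using X by simp
    have "length (X @ tl Y) - 2 = length X - 1" using True X by simp
    hence "(X @ tl Y) ! (length (X @ tl Y) - 2) = X ! (length X - 1)"
      using lt by (simp only: nth_append if_True)
    also have "\<dots> = last X" using X by (cases X) (auto simp: last_conv_nth)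
    also have "\<dots> = Y ! 0" using j Yne by (simp add: hd_conv_nth)
    finally show ?thesis using True by simp
  next
    case False
    hence lY3: "length Y \<ge> 3" using Y by simp
    have "length (X @ tl Y) - 2 = length X + (length Y - 3)" using lY3 X by simp
    hence "(X @ tl Y) ! (length (X @ tl Y) - 2) = tl Y ! (length Y - 3)"
      by (simp only: nth_append_length_plus)
    also have "\<dots> = Y ! Suc (length Y - 3)" using lY3 Yne by (simp add: nth_tl)
    also have "Suc (length Y - 3) = length Y - 2" using lY3 by linarith
    finally show ?thesis .
  qed
  show ?thesis using i1 i2 len last hd by blast
qed

definition Zedge :: "(int \<Rightarrow> 'n) \<Rightarrow> 'n \<Rightarrow> 'n \<Rightarrow> bool" where
  "Zedge c a b \<longleftrightarrow> (\<exists>t. (a = c t \<and> b = c (t+1)) \<or> (b = c t \<and> a = c (t+1)))"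

definition detour :: "(int \<Rightarrow> 'n) \<Rightarrow> ('n \<times> 'n) set \<Rightarrow> 'n list \<Rightarrow> bool" where
  "detour c E P \<longleftrightarrow> nb_walk E P \<and> hd P \<in> range c \<and> last P \<in> range c \<and> length P \<ge> 2
     \<and> (\<forall>r. 0 < r \<and> r < length P - 1 \<longrightarrow> P ! r \<notin> range c)
     \<and> (length P = 2 \<longrightarrow> \<not> Zedge c (P ! 0) (P ! 1))"

definition branch :: "('n \<times> 'n) set \<Rightarrow> 'n \<Rightarrow> 'n list \<Rightarrow> 'n list \<Rightarrow> bool" where
  "branch E v X Y \<longleftrightarrow> nb_walk E X \<and> hd X = v \<and> last X = v \<and> length X \<ge> 2
     \<and> nb_walk E Y \<and> hd Y = v \<and> last Y = v \<and> length Y \<ge> 2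
     \<and> X ! (length X - 2) \<noteq> X ! 1 \<and> X ! (length X - 2) \<noteq> Y ! 1
     \<and> Y ! (length Y - 2) \<noteq> X ! 1 \<and> X ! 1 \<noteq> Y ! 1"

lemma detour_branch:
  assumes noloops: "\<forall>i. (i, i) \<notin> E" and cy: "cycf c L" "cedges E c" and D: "detour c E P"
  shows "\<exists>v X Y. branch E v X Y"
proof -
  have Pp: "nb_walk E P" "hd P \<in> range c" "last P \<in> range c" "length P \<ge> 2"
    "\<And>r. 0 < r \<Longrightarrow> r < length P - 1 \<Longrightarrow> P ! r \<notin> range c"
    "length P = 2 \<Longrightarrow> \<not> Zedge c (P ! 0) (P ! 1)" using D unfolding detour_def by blast+
  obtain i where i: "hd P = c i" using Pp(2) by blast
  obtain j where j: "last P = c j" using Pp(3) by blast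
  have Pne: "P \<noteq> []" using Pp(4) by (cases P) auto
  have P0: "P ! 0 = c i" using i Pne by (simp add: hd_conv_nth)
  have Pl: "P ! (length P - 1) = c j" using j Pne by (simp add: last_conv_nth)
  have L3: "L \<ge> 3" by (rule cycf_L[OF cy(1)])
  define X where "X = cwalk c i L"
  have Xp: "nb_walk E X" "hd X = c i" "last X = c i" "length X \<ge> 2" "X ! 1 = c (i+1)"
    "X ! (length X - 2) = c (i - 1)"
  proof -
    show "nb_walk E X" unfolding X_def by (rule cwalk_nb[OF cy])
    show "hd X = c i" unfolding X_def by simp
    show "last X = c i" unfolding X_def using cycf_eq[OF cy(1)] by simp
    show "length X \<ge> 2" unfolding X_def using L3 by simp
    show "X ! 1 = c (i+1)" unfolding X_def using L3 cwalk_nth[of 1 L c i] by simp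
    have "X ! (length X - 2) = c (i + int (L - 1))" unfolding X_def using L3 cwalk_nth[of "L-1" L c i] by simp
    also have "\<dots> = c (i - 1)" using cycf_eq[OF cy(1)] L3 by (simp add: of_nat_diff)
    finally show "X ! (length X - 2) = c (i - 1)" .
  qed
  have jX1: "c (i - 1) \<noteq> c (i + 1)" using cycf_basic[OF cy(1)] by blast
  define k where "k = nat ((i - j) mod int L)"
  have Lp: "int L > 0" using L3 by simp
  have kk: "c (j + int k) = c i"
  proof -
    have "int k = (i - j) mod int L" unfolding k_def using Lp by simp
    moreover have "(i - j) - int L * ((i - j) div int L) = (i - j) mod int L"
      by (rule minus_mult_div_eq_mod)
    ultimately have "j + int k - i = - (int L * ((i - j) div int L))" by linarith
    hence "int L dvd (j + int k - i)" by simp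
    thus ?thesis using cycf_eq[OF cy(1)] by simp
  qed
  show ?thesis
  proof (cases "k = 0")
    case True
    hence cji: "c j = c i" using kk by simp
    have l3: "length P \<ge> 3"
    proof (rule ccontr)
      assume "\<not> length P \<ge> 3"
      hence l2: "length P = 2" using Pp(4) by simp
      have "(P ! 0, P ! Suc 0) \<in> E" using Pp(1) l2 unfolding nb_walk_iff epath_def by simp
      moreover have "P ! Suc 0 = c j" using Pl l2 by simp
      ultimately show False using P0 cji noloops by simp
    qed
    have o1: "P ! 1 \<notin> range c" using Pp(5)[of 1] l3 by simp
    have o2: "P ! (length P - 2) \<notin> range c" using Pp(5)[of "length P - 2"] l3 by simp
    have o3: "P ! 1 \<noteq> c (i+1)" "P ! 1 \<noteq> c (i-1)" "P ! (length P - 2) \<noteq> c (i+1)"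
      using o1 o2 by (metis rangeI)+
    have "branch E (c i) X P"
      unfolding branch_def using Xp Pp(1,4) i j cji jX1 o3 by auto
    thus ?thesis by blast
  next
    case False
    define A where "A = cwalk c j k"
    have Ap: "nb_walk E A" "hd A = c j" "last A = c i" "length A \<ge> 2" "A ! 1 = c (j + 1)"
      "A ! (length A - 2) = c (i - 1)"
    proof -
      show "nb_walk E A" unfolding A_def by (rule cwalk_nb[OF cy])
      show "hd A = c j" unfolding A_def by simp
      show "last A = c i" unfolding A_def using kk by simp
      show "length A \<ge> 2" unfolding A_def using False by simp
      show "A ! 1 = c (j+1)" unfolding A_def using False cwalk_nth[of 1 k c j] by simp
      have "A ! (length A - 2) = c (j + int (k - 1))" unfolding A_def using False cwalk_nth[of "k-1" k c j] by simp
      also have "\<dots> = c (i - 1)"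
      proof -
        have dv: "int L dvd (j + int k - i)" using kk cycf_eq[OF cy(1)] by simp
        have eq: "j + int (k - 1) - (i - 1) = j + int k - i" using False by (simp add: of_nat_diff)
        have "int L dvd (j + int (k - 1) - (i - 1))" unfolding eq by (rule dv)
        thus ?thesis using cycf_eq[OF cy(1)] by blast
      qed
      finally show "A ! (length A - 2) = c (i - 1)" .
    qed
    define Y where "Y = P @ tl A"
    have ai: "Y ! 1 = P ! 1 \<and> Y ! (length Y - 2) = A ! (length A - 2) \<and> length Y = length P + length A - 1
      \<and> last Y = last A \<and> hd Y = hd P"
      unfolding Y_def by (rule app_idx[OF Pp(4) Ap(4)]) (use j Ap in simp)
    have noZ: "P ! 1 \<noteq> c (i+1) \<and> P ! 1 \<noteq> c (i - 1) \<and> P ! (length P - 2) \<noteq> c (j + 1)"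
    proof (cases "length P = 2")
      case True
      have nz: "\<not> Zedge c (c i) (c j)" using Pp(6)[OF True] P0 Pl True by simp
      have P1: "P ! 1 = c j" using Pl True by simp
      have a: "c j \<noteq> c (i+1)" using nz unfolding Zedge_def by blast
      have b: "c j \<noteq> c (i - 1)"
      proof
        assume "c j = c (i - 1)"
        hence "c j = c (i - 1) \<and> c i = c (i - 1 + 1)" by simp
        thus False using nz unfolding Zedge_def by blast
      qed
      have cc: "c i \<noteq> c (j + 1)" using nz unfolding Zedge_def by blast
      show ?thesis using a b cc P1 P0 True by simp
    next
      case False
      hence l3: "length P \<ge> 3" using Pp(4) by simp
      have o1: "P ! 1 \<notin> range c" using Pp(5)[of 1] l3 by simp
      have o2: "P ! (length P - 2) \<notin> range c" using Pp(5)[of "length P - 2"] l3 by simp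
      show ?thesis using o1 o2 by blast
    qed
    have Ynb: "nb_walk E Y" unfolding Y_def
      by (rule nb_append[OF Pp(1) Ap(1)]) (use j Ap noZ in auto)
    have "branch E (c i) X Y"
      unfolding branch_def using Xp Ynb ai Ap Pp(4) i jX1 noZ by auto
    thus ?thesis by blast
  qed
qed


lemma first_after:
  fixes j t :: nat
  assumes "Q j" "t \<le> j"
  shows "\<exists>e. t \<le> e \<and> e \<le> j \<and> Q e \<and> (\<forall>u. t \<le> u \<and> u < e \<longrightarrow> \<not> Q u)"
proof -
  define e where "e = (LEAST u. t \<le> u \<and> Q u)"
  have e1: "t \<le> e \<and> Q e" unfolding e_def by (rule LeastI[of _ j]) (use assms in simp)
  have e2: "e \<le> j" unfolding e_def by (rule Least_le) (use assms in simp)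
  have e3: "\<forall>u. t \<le> u \<and> u < e \<longrightarrow> \<not> Q u" unfolding e_def using not_less_Least by blast
  show ?thesis using e1 e2 e3 by blast
qed

lemma last_before:
  fixes s0 t :: nat
  assumes "Q s0" "s0 \<le> t"
  shows "\<exists>s. s0 \<le> s \<and> s \<le> t \<and> Q s \<and> (\<forall>u. s < u \<and> u \<le> t \<longrightarrow> \<not> Q u)"
  using assms(2)
proof (induction t)
  case 0 thus ?case using assms(1) by (intro exI[of _ 0]) auto
next
  case (Suc t)
  show ?case
  proof (cases "Q (Suc t)")
    case True thus ?thesis using Suc.prems by (intro exI[of _ "Suc t"]) auto
  next
    case False
    show ?thesis
    proof (cases "s0 = Suc t")
      case True thus ?thesis using assms(1) False by simp
    next
      case F2: False
      hence "s0 \<le> t" using Suc.prems by simp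
      then obtain s where s: "s0 \<le> s" "s \<le> t" "Q s" "\<forall>u. s < u \<and> u \<le> t \<longrightarrow> \<not> Q u"
        using Suc.IH by blast
      show ?thesis using s False by (intro exI[of _ s]) (auto simp: le_Suc_eq)
    qed
  qed
qed

lemma Zedge_range: "Zedge c a b \<Longrightarrow> a \<in> range c \<and> b \<in> range c"
  unfolding Zedge_def by auto

lemma Zedge_sym: "Zedge c a b \<longleftrightarrow> Zedge c b a"
  unfolding Zedge_def by blast

lemma extract_detour:
  assumes W: "nb_walk R W" and h: "hd W \<in> range c" and l: "last W \<in> range c"
    and out: "(\<exists>t < length W. W ! t \<notin> range c) \<or>
      (\<exists>t. Suc t < length W \<and> W ! t \<in> range c \<and> W ! Suc t \<in> range c \<and> \<not> Zedge c (W ! t) (W ! Suc t))"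
  shows "\<exists>P. detour c R P"
proof -
  have Wne: "W \<noteq> []" using W by auto
  have W0: "W ! 0 \<in> range c" using h Wne by (simp add: hd_conv_nth)
  have Wl: "W ! (length W - 1) \<in> range c" using l Wne by (simp add: last_conv_nth)
  have seg: "detour c R (take (e - s + 1) (drop s W))"
    if se: "s < e" "e < length W" "W ! s \<in> range c" "W ! e \<in> range c"
      and int: "\<forall>u. s < u \<and> u < e \<longrightarrow> W ! u \<notin> range c"
      and two: "e = Suc s \<Longrightarrow> \<not> Zedge c (W ! s) (W ! e)" for s e
  proof -
    define P where "P = take (e - s + 1) (drop s W)"
    have lP: "length P = e - s + 1" unfolding P_def using se by simp
    have nP: "\<And>r. r < length P \<Longrightarrow> P ! r = W ! (s + r)"
      unfolding P_def using se by (simp add: nth_take nth_drop)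
    have nb: "nb_walk R P" unfolding P_def by (rule nb_walk_segment[OF W]) (use se in auto)
    have Pne: "P \<noteq> []" using lP by auto
    have hP: "hd P = W ! s" using nP[of 0] Pne lP by (simp add: hd_conv_nth)
    have lastP: "last P = W ! e" using nP[of "length P - 1"] Pne lP se by (simp add: last_conv_nth)
    show ?thesis unfolding P_def[symmetric] detour_def
    proof (intro conjI allI impI)
      show "nb_walk R P" by (rule nb)
      show "hd P \<in> range c" using hP se by simp
      show "last P \<in> range c" using lastP se by simp
      show "length P \<ge> 2" using lP se by simp
    next
      fix r assume r: "0 < r \<and> r < length P - 1"
      hence "s < s + r \<and> s + r < e" using lP by arith
      thus "P ! r \<notin> range c" using nP[of r] int lP r by simp
    next
      assume "length P = 2"
      hence "e = Suc s" using lP se by simp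
      moreover have "P ! 0 = W ! s" "P ! 1 = W ! e" using nP[of 0] nP[of 1] lP \<open>e = Suc s\<close> by auto
      ultimately show "\<not> Zedge c (P ! 0) (P ! 1)" using two by simp
    qed
  qed
  from out show ?thesis
  proof
    assume "\<exists>t < length W. W ! t \<notin> range c"
    then obtain t where t: "t < length W" "W ! t \<notin> range c" by blast
    obtain s where s: "s \<le> t" "W ! s \<in> range c" "\<forall>u. s < u \<and> u \<le> t \<longrightarrow> W ! u \<notin> range c"
      using last_before[of "\<lambda>u. W ! u \<in> range c" 0 t] W0 by auto
    obtain e where e: "t \<le> e" "e \<le> length W - 1" "W ! e \<in> range c" "\<forall>u. t \<le> u \<and> u < e \<longrightarrow> W ! u \<notin> range c"
    proof -
      have "t \<le> length W - 1" using t by simp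
      from first_after[of "\<lambda>u. W ! u \<in> range c" "length W - 1" t, OF Wl this]
      show ?thesis using that by blast
    qed
    have st: "s < t" using s t by (cases "s = t") auto
    have te: "t < e" using e t by (cases "t = e") auto
    have "detour c R (take (e - s + 1) (drop s W))"
    proof (rule seg)
      show "s < e" using st te by simp
      show "e < length W" using e t by simp
      show "W ! s \<in> range c" "W ! e \<in> range c" using s e by auto
      show "\<forall>u. s < u \<and> u < e \<longrightarrow> W ! u \<notin> range c"
      proof (intro allI impI)
        fix u assume u: "s < u \<and> u < e"
        show "W ! u \<notin> range c"
        proof (cases "u \<le> t")
          case True thus ?thesis using s(3) u by simp
        next
          case False thus ?thesis using e(4) u by simp
        qed
      qed
      show "e = Suc s \<Longrightarrow> \<not> Zedge c (W ! s) (W ! e)" using st te by simp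
    qed
    thus ?thesis by blast
  next
    assume "\<exists>t. Suc t < length W \<and> W ! t \<in> range c \<and> W ! Suc t \<in> range c \<and> \<not> Zedge c (W ! t) (W ! Suc t)"
    then obtain t where t: "Suc t < length W" "W ! t \<in> range c" "W ! Suc t \<in> range c"
      "\<not> Zedge c (W ! t) (W ! Suc t)" by blast
    have "detour c R (take (Suc t - t + 1) (drop t W))"
      by (rule seg) (use t in auto)
    thus ?thesis by blast
  qed
qed

lemma touch_detour:
  assumes cy: "cycf d M" "cedges R d" and q: "d q \<in> range c"
    and nz: "\<not> Zedge c (d p) (d (p+1))"
  shows "\<exists>P. detour c R P"
proof -
  have M3: "M \<ge> 3" by (rule cycf_L[OF cy(1)])
  define W where "W = cwalk d q M"
  have nb: "nb_walk R W" unfolding W_def by (rule cwalk_nb[OF cy])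
  have h: "hd W \<in> range c" unfolding W_def using q by simp
  have "d (q + int M) = d q" using cycf_eq[OF cy(1)] by simp
  hence l: "last W \<in> range c" unfolding W_def using q by simp
  define t where "t = nat ((p - q) mod int M)"
  have Mp: "int M > 0" using M3 by simp
  have tM: "t < M" unfolding t_def using Mp by (simp add: nat_less_iff)
  have qt: "d (q + int t) = d p"
  proof -
    have "int t = (p - q) mod int M" unfolding t_def using Mp by simp
    moreover have "(p - q) - int M * ((p - q) div int M) = (p - q) mod int M"
      by (rule minus_mult_div_eq_mod)
    ultimately have "q + int t - p = - (int M * ((p - q) div int M))" by linarith
    hence "int M dvd (q + int t - p)" by simp
    thus ?thesis using cycf_eq[OF cy(1)] by blast
  qed
  have qt1: "d (q + int (Suc t)) = d (p + 1)"
  proof -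
    have dv: "int M dvd (q + int t - p)" using qt cycf_eq[OF cy(1)] by blast
    have eq: "q + int (Suc t) - (p + 1) = q + int t - p" by simp
    have "int M dvd (q + int (Suc t) - (p + 1))" unfolding eq by (rule dv)
    thus ?thesis using cycf_eq[OF cy(1)] by blast
  qed
  have Wt: "W ! t = d p" unfolding W_def using cwalk_nth[of t M d q] tM qt by simp
  have Wt1: "W ! Suc t = d (p+1)" unfolding W_def using cwalk_nth[of "Suc t" M d q] tM qt1 by simp
  have lW: "Suc t < length W" unfolding W_def using tM by simp
  have "(\<exists>t < length W. W ! t \<notin> range c) \<or>
      (\<exists>t. Suc t < length W \<and> W ! t \<in> range c \<and> W ! Suc t \<in> range c \<and> \<not> Zedge c (W ! t) (W ! Suc t))"
  proof (cases "d p \<in> range c \<and> d (p+1) \<in> range c")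
    case True thus ?thesis using lW Wt Wt1 nz by auto
  next
    case False
    hence "W ! t \<notin> range c \<or> W ! Suc t \<notin> range c" using Wt Wt1 by auto
    thus ?thesis using lW by (metis Suc_lessD)
  qed
  thus ?thesis using extract_detour[OF nb h l] by blast
qed

lemma convert_detour:
  assumes D: "detour c {(x,y). und_adj E C x y} P"
    and CII: "\<forall>a b. a \<in> C \<longrightarrow> b \<in> C \<longrightarrow> (a,b) \<in> E \<longrightarrow> \<not> Zedge c a b \<longrightarrow> (b,a) \<in> E"
  shows "\<exists>P'. detour c E P'"
proof -
  let ?R = "{(x,y). und_adj E C x y}"
  have Pp: "nb_walk ?R P" "hd P \<in> range c" "last P \<in> range c" "length P \<ge> 2"
    "\<And>r. 0 < r \<Longrightarrow> r < length P - 1 \<Longrightarrow> P ! r \<notin> range c"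
    "length P = 2 \<Longrightarrow> \<not> Zedge c (P ! 0) (P ! 1)" using D unfolding detour_def by blast+
  have ep: "\<And>r. Suc r < length P \<Longrightarrow> und_adj E C (P ! r) (P ! Suc r)"
    using Pp(1) unfolding nb_walk_iff epath_def by auto
  show ?thesis
  proof (cases "length P = 2")
    case True
    then obtain x y where xy: "P = [x, y]" by (cases P; cases "tl P") auto
    have nz: "\<not> Zedge c x y" using Pp(6) True xy by simp
    have ua: "und_adj E C x y" using ep[of 0] xy by simp
    have xyS: "x \<in> range c" "y \<in> range c" using Pp(2,3) xy by auto
    show ?thesis
    proof (cases "(x,y) \<in> E")
      case True
      have "detour c E [x, y]" unfolding detour_def
        using True xyS nz by (auto simp: nb_walk_Cons2)
      thus ?thesis by blast
    next
      case False
      hence "(y,x) \<in> E" using ua unfolding und_adj_def by auto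
      moreover have "\<not> Zedge c y x" using nz Zedge_sym by metis
      ultimately have "detour c E [y, x]" unfolding detour_def
        using xyS by (auto simp: nb_walk_Cons2)
      thus ?thesis by blast
    qed
  next
    case False
    hence l3: "length P \<ge> 3" using Pp(4) by simp
    have eE: "(P ! r, P ! Suc r) \<in> E" if r: "Suc r < length P" for r
    proof -
      have ua: "und_adj E C (P ! r) (P ! Suc r)" by (rule ep[OF r])
      have out: "P ! r \<notin> range c \<or> P ! Suc r \<notin> range c"
      proof (cases "r = 0")
        case True thus ?thesis using Pp(5)[of 1] l3 by simp
      next
        case False thus ?thesis using Pp(5)[of r] r by simp
      qed
      have nz: "\<not> Zedge c (P ! r) (P ! Suc r)" using out Zedge_range by metis
      show ?thesis
      proof (cases "(P ! r, P ! Suc r) \<in> E")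
        case True thus ?thesis .
      next
        case False
        hence "(P ! Suc r, P ! r) \<in> E" using ua unfolding und_adj_def by auto
        moreover have "\<not> Zedge c (P ! Suc r) (P ! r)" using nz Zedge_sym by metis
        ultimately show ?thesis using CII ua unfolding und_adj_def by blast
      qed
    qed
    have "nb_walk E P" using Pp(1) eE unfolding nb_walk_iff epath_def by blast
    hence "detour c E P" using D unfolding detour_def by blast
    thus ?thesis by blast
  qed
qed


lemma path_segment_nb:
  assumes "distinct ps" "ps \<noteq> []" "epath E ps" "s \<le> e" "e < length ps"
  shows "nb_walk E (take (e - s + 1) (drop s ps))"
  by (rule nb_walk_segment[OF distinct_nb_walk[OF assms(1-3)] assms(4,5)])

lemma disjoint_detour:
  assumes C: "C \<in> components E" and cy: "cycf c L" "cedges E c" "range c \<subseteq> C"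
    and cd: "cycf d M" "cedges E d" "range d \<subseteq> C" and dis: "range c \<inter> range d = {}"
  shows "\<exists>P. detour c E P"
proof -
  have c0: "c 0 \<in> C" "d 0 \<in> C" using cy(3) cd(3) by auto
  have ne: "c 0 \<noteq> d 0" using dis by (metis IntI empty_iff rangeI)
  have rr: "(c 0, d 0) \<in> E\<^sup>+" "(d 0, c 0) \<in> E\<^sup>+" using comp_pair[OF C c0 ne] by auto
  have rr2: "(c 0, d 0) \<in> E\<^sup>*" "(d 0, c 0) \<in> E\<^sup>*" using rr by auto
  from simple_path[OF rr2(1)] obtain ps1 where
    p1: "distinct ps1" "ps1 \<noteq> []" "hd ps1 = c 0" "last ps1 = d 0" "epath E ps1" by blast
  from simple_path[OF rr2(2)] obtain ps2 where
    p2: "distinct ps2" "ps2 \<noteq> []" "hd ps2 = d 0" "last ps2 = c 0" "epath E ps2" by blast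
  have p10: "ps1 ! 0 \<in> range c" using p1 by (simp add: hd_conv_nth)
  have p1l: "ps1 ! (length ps1 - 1) \<in> range d" using p1 by (simp add: last_conv_nth)
  have p20: "ps2 ! 0 \<in> range d" using p2 by (simp add: hd_conv_nth)
  have p2l: "ps2 ! (length ps2 - 1) \<in> range c" using p2 by (simp add: last_conv_nth)
  obtain e1 where e1: "e1 \<le> length ps1 - 1" "ps1 ! e1 \<in> range d" "\<forall>u. u < e1 \<longrightarrow> ps1 ! u \<notin> range d"
    using first_after[of "\<lambda>u. ps1 ! u \<in> range d" "length ps1 - 1" 0, OF p1l] by auto
  obtain s1 where s1: "s1 \<le> e1" "ps1 ! s1 \<in> range c" "\<forall>u. s1 < u \<and> u \<le> e1 \<longrightarrow> ps1 ! u \<notin> range c"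
    using last_before[of "\<lambda>u. ps1 ! u \<in> range c" 0 e1, OF p10] by auto
  have se1: "s1 < e1" using s1 e1 dis by (cases "s1 = e1") auto
  obtain e2 where e2: "e2 \<le> length ps2 - 1" "ps2 ! e2 \<in> range c" "\<forall>u. u < e2 \<longrightarrow> ps2 ! u \<notin> range c"
    using first_after[of "\<lambda>u. ps2 ! u \<in> range c" "length ps2 - 1" 0, OF p2l] by auto
  obtain s2 where s2: "s2 \<le> e2" "ps2 ! s2 \<in> range d" "\<forall>u. s2 < u \<and> u \<le> e2 \<longrightarrow> ps2 ! u \<notin> range d"
    using last_before[of "\<lambda>u. ps2 ! u \<in> range d" 0 e2, OF p20] by auto
  have se2: "s2 < e2" using s2 e2 dis by (cases "s2 = e2") auto
  have l1: "e1 < length ps1" using e1 p1(2) by (cases ps1) auto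
  have l2: "e2 < length ps2" using e2 p2(2) by (cases ps2) auto
  define Q1 where "Q1 = take (e1 - s1 + 1) (drop s1 ps1)"
  define Q2 where "Q2 = take (e2 - s2 + 1) (drop s2 ps2)"
  have nQ1: "length Q1 = e1 - s1 + 1" "\<And>r. r < length Q1 \<Longrightarrow> Q1 ! r = ps1 ! (s1 + r)"
    unfolding Q1_def using l1 se1 by (auto simp: nth_take nth_drop)
  have nQ2: "length Q2 = e2 - s2 + 1" "\<And>r. r < length Q2 \<Longrightarrow> Q2 ! r = ps2 ! (s2 + r)"
    unfolding Q2_def using l2 se2 by (auto simp: nth_take nth_drop)
  have nb1: "nb_walk E Q1" unfolding Q1_def by (rule path_segment_nb[OF p1(1,2,5)]) (use se1 l1 in auto)
  have nb2: "nb_walk E Q2" unfolding Q2_def by (rule path_segment_nb[OF p2(1,2,5)]) (use se2 l2 in auto)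
  have Q1ne: "Q1 \<noteq> []" "Q2 \<noteq> []" using nQ1 nQ2 by auto
  have hQ1: "hd Q1 = ps1 ! s1" using nQ1 Q1ne by (simp add: hd_conv_nth)
  have lQ1: "last Q1 = ps1 ! e1" using nQ1 Q1ne se1 by (simp add: last_conv_nth)
  have hQ2: "hd Q2 = ps2 ! s2" using nQ2 Q1ne by (simp add: hd_conv_nth)
  have lQ2: "last Q2 = ps2 ! e2" using nQ2 Q1ne se2 by (simp add: last_conv_nth)
  obtain a' where a': "ps1 ! e1 = d a'" using e1(2) by blast
  obtain b' where b': "ps2 ! s2 = d b'" using s2(2) by blast
  have M3: "M \<ge> 3" by (rule cycf_L[OF cd(1)])
  have Mp: "int M > 0" using M3 by simp
  define k where "k = nat ((b' - a') mod int M) + M"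
  define A where "A = cwalk d a' k"
  have kM: "k \<ge> M" unfolding k_def by simp
  have Alast: "d (a' + int k) = d b'"
  proof -
    have ik: "int k = (b' - a') mod int M + int M" unfolding k_def using Mp by simp
    have "(b' - a') - int M * ((b' - a') div int M) = (b' - a') mod int M" by (rule minus_mult_div_eq_mod)
    hence "a' + int k - b' = int M * (1 - (b' - a') div int M)" using ik by (simp add: algebra_simps)
    hence "int M dvd (a' + int k - b')" by simp
    thus ?thesis using cycf_eq[OF cd(1)] by blast
  qed
  have Ap: "nb_walk E A" "hd A = d a'" "last A = d b'" "length A \<ge> 2" "A ! 1 = d (a' + 1)"
    "A ! (length A - 2) \<in> range d"
  proof -
    show "nb_walk E A" unfolding A_def by (rule cwalk_nb[OF cd(1,2)])
    show "hd A = d a'" unfolding A_def by simp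
    show "last A = d b'" unfolding A_def using Alast by simp
    show "length A \<ge> 2" unfolding A_def using kM M3 by simp
    show "A ! 1 = d (a' + 1)" unfolding A_def using kM M3 cwalk_nth[of 1 k d a'] by simp
    show "A ! (length A - 2) \<in> range d" unfolding A_def using kM M3 cwalk_nth[of "k-1" k d a'] by simp
  qed
  have lQ1ge: "length Q1 \<ge> 2" using nQ1 se1 by simp
  have lQ2ge: "length Q2 \<ge> 2" using nQ2 se2 by simp
  have j1: "Q1 ! (length Q1 - 2) \<noteq> A ! 1"
  proof -
    have "Q1 ! (length Q1 - 2) = ps1 ! (e1 - 1)" using nQ1 se1 by simp
    moreover have "ps1 ! (e1 - 1) \<notin> range d" using e1(3) se1 by simp
    ultimately show ?thesis using Ap(5) by auto
  qed
  define W1 where "W1 = Q1 @ tl A"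
  have nbW1: "nb_walk E W1" unfolding W1_def
    by (rule nb_append[OF nb1 Ap(1)]) (use lQ1 a' Ap j1 in auto)
  have aiW1: "W1 ! 1 = Q1 ! 1 \<and> W1 ! (length W1 - 2) = A ! (length A - 2) \<and> length W1 = length Q1 + length A - 1
      \<and> last W1 = last A \<and> hd W1 = hd Q1"
    unfolding W1_def by (rule app_idx[OF lQ1ge Ap(4)]) (use lQ1 a' Ap in simp)
  have j2: "W1 ! (length W1 - 2) \<noteq> Q2 ! 1"
  proof -
    have "Q2 ! 1 = ps2 ! (s2 + 1)" using nQ2 se2 by simp
    moreover have "ps2 ! (s2 + 1) \<notin> range d" using s2(3) se2 by simp
    ultimately show ?thesis using aiW1 Ap(6) by auto
  qed
  define W where "W = W1 @ tl Q2"
  have nbW: "nb_walk E W" unfolding W_def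
    by (rule nb_append[OF nbW1 nb2]) (use aiW1 Ap hQ2 b' j2 in auto)
  have lW1ge: "length W1 \<ge> 2" using aiW1 lQ1ge Ap(4) by simp
  have aiW: "W ! 1 = W1 ! 1 \<and> W ! (length W - 2) = Q2 ! (length Q2 - 2) \<and> length W = length W1 + length Q2 - 1
      \<and> last W = last Q2 \<and> hd W = hd W1"
    unfolding W_def by (rule app_idx[OF lW1ge lQ2ge]) (use aiW1 Ap hQ2 b' in simp)
  have hW: "hd W \<in> range c" using aiW aiW1 hQ1 s1 by simp
  have lW: "last W \<in> range c" using aiW lQ2 e2 by simp
  have idx: "length Q1 - 1 < length W" using aiW aiW1 lQ1ge Ap(4) lQ2ge by simp
  have "W ! (length Q1 - 1) = Q1 ! (length Q1 - 1)"
  proof -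
    have "length Q1 - 1 < length W1" using aiW1 lQ1ge Ap(4) by simp
    hence "W ! (length Q1 - 1) = W1 ! (length Q1 - 1)" unfolding W_def by (simp add: nth_append)
    also have "\<dots> = Q1 ! (length Q1 - 1)"
    proof -
      have lt: "length Q1 - 1 < length Q1" using lQ1ge by linarith
      show ?thesis unfolding W1_def using lt by (simp only: nth_append if_True)
    qed
    finally show ?thesis .
  qed
  also have "\<dots> = d a'" using lQ1 a' Q1ne by (simp add: last_conv_nth)
  finally have "W ! (length Q1 - 1) \<notin> range c" using dis by auto
  hence "\<exists>t < length W. W ! t \<notin> range c" using idx by blast
  thus ?thesis using extract_detour[OF nbW hW lW] by blast
qed

lemma oneway_cyc:
  assumes C: "C \<in> components E" and ab: "a \<in> C" "b \<in> C" "(a,b) \<in> E" "(b,a) \<notin> E"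
  shows "\<exists>d M. cycf d M \<and> cedges E d \<and> range d \<subseteq> C \<and> (\<exists>p. d p = a \<and> d (p+1) = b)"
proof -
  have ne: "b \<noteq> a" using ab by auto
  have "(b,a) \<in> E\<^sup>+" using comp_pair[OF C ab(2,1) ne] by blast
  hence "(b,a) \<in> E\<^sup>*" by simp
  from simple_path[OF this] obtain ps where ps: "distinct ps" "ps \<noteq> []" "hd ps = b" "last ps = a" "epath E ps"
    by blast
  have l3: "length ps \<ge> 3"
  proof (rule ccontr)
    assume "\<not> length ps \<ge> 3"
    moreover have "length ps \<noteq> 1" using ps ne by (cases ps) auto
    moreover have "length ps \<noteq> 0" using ps by simp
    ultimately have "length ps = 2" by linarith
    then obtain u v where "ps = [u, v]" by (cases ps; cases "tl ps") auto
    thus False using ps ab(4) by (simp add: epath_Cons2)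
  qed
  define M where "M = length ps"
  define d where "d = (\<lambda>t. ps ! nat (t mod int M))"
  from list_to_cyc[OF ps(1) refl l3 ps(5)] ps ab(3)
  have cc: "cycf d M" "cedges E d" unfolding d_def M_def by auto
  have inC: "ps ! r \<in> C" if r: "r < length ps" for r
  proof -
    have "(ps!0, ps!r) \<in> E\<^sup>*" using epath_reach_rt[OF ps(5), of 0 r] r by simp
    hence 1: "(b, ps!r) \<in> E\<^sup>*" using ps by (simp add: hd_conv_nth)
    have "(ps!r, ps!(length ps - 1)) \<in> E\<^sup>*" using epath_reach_rt[OF ps(5), of r "length ps - 1"] r by simp
    hence "(ps!r, a) \<in> E\<^sup>*" using ps by (simp add: last_conv_nth)
    hence 2: "(ps!r, b) \<in> E\<^sup>*" using ab(3) by simp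
    show ?thesis by (rule comp_closed[OF C ab(2) 1 2])
  qed
  have rC: "range d \<subseteq> C"
  proof
    fix x assume "x \<in> range d"
    then obtain t where t: "x = d t" by blast
    have "int M > 0" using l3 unfolding M_def by linarith
    hence "nat (t mod int M) < M" by (simp add: nat_less_iff)
    thus "x \<in> C" using t inC unfolding d_def M_def by simp
  qed
  have "d (int M - 1) = a"
  proof -
    have "int M > 0" using l3 unfolding M_def by linarith
    hence "(int M - 1) mod int M = int M - 1" by (intro mod_pos_pos_trivial) auto
    hence "nat ((int M - 1) mod int M) = length ps - 1" unfolding M_def using l3 by simp
    thus ?thesis unfolding d_def using ps by (simp add: last_conv_nth)
  qed
  moreover have "d (int M - 1 + 1) = b" unfolding d_def using ps by (simp add: hd_conv_nth)
  ultimately show ?thesis using cc rC by blast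
qed


definition gmap :: "(int \<Rightarrow> 'n) \<Rightarrow> nat \<Rightarrow> int \<Rightarrow> int \<Rightarrow> 'n list" where
  "gmap f L b \<delta> = map (\<lambda>t. f (b + \<delta> * int t)) [0..<L]"

definition rclass :: "'n list \<Rightarrow> 'n list set" where
  "rclass xs = {ys. \<exists>k. ys = rotate k xs \<or> ys = rotate k (rev xs)}"

lemma gmap_length[simp]: "length (gmap f L b \<delta>) = L" by (simp add: gmap_def)
lemma gmap_nth: "r < L \<Longrightarrow> gmap f L b \<delta> ! r = f (b + \<delta> * int r)" by (simp add: gmap_def)

lemma gmap_eq:
  assumes "cycf f L" "int L dvd (b - b')"
  shows "gmap f L b \<delta> = gmap f L b' \<delta>"
proof (rule nth_equalityI)
  fix r assume "r < length (gmap f L b \<delta>)"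
  hence r: "r < L" by simp
  have "int L dvd (b + \<delta> * int r - (b' + \<delta> * int r))" using assms(2) by simp
  thus "gmap f L b \<delta> ! r = gmap f L b' \<delta> ! r" using r gmap_nth cycf_eq[OF assms(1)] by metis
qed simp

lemma gmap_rot:
  assumes cy: "cycf f L"
  shows "rotate k (gmap f L b \<delta>) = gmap f L (b + \<delta> * int k) \<delta>"
proof (rule nth_equalityI)
  have L0: "L > 0" using cycf_L[OF cy] by simp
  fix r assume "r < length (rotate k (gmap f L b \<delta>))"
  hence r: "r < L" by simp
  have "rotate k (gmap f L b \<delta>) ! r = gmap f L b \<delta> ! ((k + r) mod L)" using r by (simp add: nth_rotate)
  also have "\<dots> = f (b + \<delta> * int ((k + r) mod L))" using L0 by (simp add: gmap_nth)
  also have "\<dots> = f (b + \<delta> * int k + \<delta> * int r)"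
  proof -
    have e: "int ((k + r) mod L) = int (k + r) - int L * int ((k + r) div L)"
      by (simp add: of_nat_mod of_nat_div minus_mult_div_eq_mod[symmetric] del: of_nat_add)
    have "b + \<delta> * int ((k + r) mod L) - (b + \<delta> * int k + \<delta> * int r) = int L * (- \<delta> * int ((k + r) div L))"
      unfolding e by (simp add: algebra_simps)
    hence "int L dvd (b + \<delta> * int ((k + r) mod L) - (b + \<delta> * int k + \<delta> * int r))" by simp
    thus ?thesis using cycf_eq[OF cy] by blast
  qed
  also have "\<dots> = gmap f L (b + \<delta> * int k) \<delta> ! r" using r by (simp add: gmap_nth)
  finally show "rotate k (gmap f L b \<delta>) ! r = gmap f L (b + \<delta> * int k) \<delta> ! r" .
qed simp

lemma gmap_rev: "rev (gmap f L b \<delta>) = gmap f L (b + \<delta> * (int L - 1)) (- \<delta>)"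
proof (rule nth_equalityI)
  fix r assume "r < length (rev (gmap f L b \<delta>))"
  hence r: "r < L" by simp
  have "rev (gmap f L b \<delta>) ! r = gmap f L b \<delta> ! (L - 1 - r)" using r by (simp add: rev_nth)
  also have "\<dots> = f (b + \<delta> * int (L - 1 - r))" using r by (simp add: gmap_nth)
  also have "int (L - 1 - r) = int L - 1 - int r" using r by (simp add: of_nat_diff)
  also have "f (b + \<delta> * (int L - 1 - int r)) = gmap f L (b + \<delta> * (int L - 1)) (- \<delta>) ! r"
    using r by (simp add: gmap_nth algebra_simps)
  finally show "rev (gmap f L b \<delta>) ! r = gmap f L (b + \<delta> * (int L - 1)) (- \<delta>) ! r" .
qed simp

lemma dvd_choose:
  assumes "\<delta> = 1 \<or> \<delta> = -1" "(L::nat) > 0"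
  shows "int L dvd (\<delta> * int (nat ((\<delta> * x) mod int L)) - x)"
proof -
  have e1: "int (nat ((\<delta> * x) mod int L)) = (\<delta> * x) mod int L" using assms(2) by simp
  have e2: "(\<delta> * x) mod int L = (\<delta> * x) - int L * ((\<delta> * x) div int L)"
    using minus_mult_div_eq_mod[of "\<delta> * x" "int L"] by simp
  have dd: "\<delta> * \<delta> = 1" using assms(1) by auto
  have "\<delta> * int (nat ((\<delta> * x) mod int L)) - x = (\<delta> * \<delta>) * x - x - \<delta> * (int L * ((\<delta> * x) div int L))"
  proof -
    have e: "int (nat ((\<delta> * x) mod int L)) = (\<delta> * x) - int L * ((\<delta> * x) div int L)"
      using e1 e2 by linarith
    show ?thesis unfolding e by (simp add: algebra_simps)
  qed
  also have "\<dots> = int L * (- \<delta> * ((\<delta> * x) div int L))" unfolding dd by (simp add: algebra_simps)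
  finally show ?thesis by simp
qed

lemma rclass_gmap:
  assumes cy: "cycf f L" and d: "\<delta> = 1 \<or> \<delta> = -1"
  shows "rclass (gmap f L b \<delta>) = {gmap f L b' \<delta>' | b' \<delta>'. \<delta>' = 1 \<or> \<delta>' = -1}"
proof
  have L0: "L > 0" using cycf_L[OF cy] by simp
  show "rclass (gmap f L b \<delta>) \<subseteq> {gmap f L b' \<delta>' | b' \<delta>'. \<delta>' = 1 \<or> \<delta>' = -1}"
  proof
    fix ys assume "ys \<in> rclass (gmap f L b \<delta>)"
    then obtain k where k: "ys = rotate k (gmap f L b \<delta>) \<or> ys = rotate k (rev (gmap f L b \<delta>))"
      unfolding rclass_def by blast
    show "ys \<in> {gmap f L b' \<delta>' | b' \<delta>'. \<delta>' = 1 \<or> \<delta>' = -1}"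
    proof (cases "ys = rotate k (gmap f L b \<delta>)")
      case True thus ?thesis using gmap_rot[OF cy] d by blast
    next
      case False
      hence "ys = rotate k (gmap f L (b + \<delta> * (int L - 1)) (- \<delta>))" using k gmap_rev by metis
      hence "ys = gmap f L (b + \<delta> * (int L - 1) + (- \<delta>) * int k) (- \<delta>)" using gmap_rot[OF cy] by simp
      moreover have "- \<delta> = 1 \<or> - \<delta> = -1" using d by auto
      ultimately show ?thesis by blast
    qed
  qed
  show "{gmap f L b' \<delta>' | b' \<delta>'. \<delta>' = 1 \<or> \<delta>' = -1} \<subseteq> rclass (gmap f L b \<delta>)"
  proof
    fix ys assume "ys \<in> {gmap f L b' \<delta>' | b' \<delta>'. \<delta>' = 1 \<or> \<delta>' = -1}"
    then obtain b' \<delta>' where ys: "ys = gmap f L b' \<delta>'" and d': "\<delta>' = 1 \<or> \<delta>' = -1" by blast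
    show "ys \<in> rclass (gmap f L b \<delta>)"
    proof (cases "\<delta>' = \<delta>")
      case True
      define k where "k = nat ((\<delta> * (b' - b)) mod int L)"
      have "int L dvd (\<delta> * int k - (b' - b))" unfolding k_def by (rule dvd_choose[OF d L0])
      hence "int L dvd ((b + \<delta> * int k) - b')" by (simp add: algebra_simps)
      hence "rotate k (gmap f L b \<delta>) = gmap f L b' \<delta>" using gmap_rot[OF cy] gmap_eq[OF cy] by metis
      hence "ys = rotate k (gmap f L b \<delta>)" using ys True by simp
      thus ?thesis unfolding rclass_def by blast
    next
      case False
      hence md: "\<delta>' = - \<delta>" using d d' by auto
      define b2 where "b2 = b + \<delta> * (int L - 1)"
      define k where "k = nat ((\<delta> * (b2 - b')) mod int L)"
      have "int L dvd (\<delta> * int k - (b2 - b'))" unfolding k_def by (rule dvd_choose[OF d L0])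
      moreover have "(b2 + (- \<delta>) * int k) - b' = - (\<delta> * int k - (b2 - b'))" by (simp add: algebra_simps)
      ultimately have "int L dvd ((b2 + (- \<delta>) * int k) - b')" by (simp only: dvd_minus_iff)
      hence "rotate k (gmap f L b2 (- \<delta>)) = gmap f L b' (- \<delta>)" using gmap_rot[OF cy] gmap_eq[OF cy] by metis
      hence "rotate k (rev (gmap f L b \<delta>)) = ys" using ys md gmap_rev unfolding b2_def by metis
      thus ?thesis unfolding rclass_def by blast
    qed
  qed
qed

lemma zedge_nbr:
  assumes cy: "cycf c L" and z: "Zedge c (c s) y"
  shows "y = c (s+1) \<or> y = c (s-1)"
proof -
  obtain t where t: "(c s = c t \<and> y = c (t+1)) \<or> (y = c t \<and> c s = c (t+1))" using z unfolding Zedge_def by blast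
  thus ?thesis
  proof
    assume h: "c s = c t \<and> y = c (t+1)"
    hence "int L dvd (s - t)" using cycf_eq[OF cy] by blast
    hence "int L dvd ((t + 1) - (s + 1))" by (metis dvd_minus_iff minus_diff_eq diff_add_cancel add_diff_cancel_right)
    hence "c (t+1) = c (s+1)" using cycf_eq[OF cy] by blast
    thus ?thesis using h by simp
  next
    assume h: "y = c t \<and> c s = c (t+1)"
    hence "int L dvd (s - (t+1))" using cycf_eq[OF cy] by blast
    hence "int L dvd (t - (s - 1))" by (metis dvd_minus_iff minus_diff_eq diff_diff_eq2 add.commute diff_diff_eq)
    hence "c t = c (s - 1)" using cycf_eq[OF cy] by blast
    thus ?thesis using h by simp
  qed
qed

lemma rot_lemma:
  assumes cy: "cycf c L" and cd: "cycf d m" and z: "\<forall>t. Zedge c (d t) (d (t+1))"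
  shows "m = L \<and> (\<exists>i \<delta>. (\<delta> = 1 \<or> \<delta> = -1) \<and> (\<forall>n::nat. d (int n) = c (i + \<delta> * int n)))"
proof -
  have "d 0 \<in> range c" using Zedge_range[OF z[rule_format, of 0]] by (rule conjunct1)
  then obtain i where i: "d 0 = c i" by (auto elim!: rangeE)
  have "Zedge c (c i) (d (0 + 1))" using z i by metis
  hence "d (0+1) = c (i+1) \<or> d (0+1) = c (i - 1)" by (rule zedge_nbr[OF cy])
  hence "d 1 = c (i + 1) \<or> d 1 = c (i + (-1))" by simp
  then obtain \<delta> where dl: "\<delta> = 1 \<or> \<delta> = -1" "d 1 = c (i + \<delta>)" by blast
  have step: "d (int n) = c (i + \<delta> * int n) \<and> d (int n + 1) = c (i + \<delta> * (int n + 1))" for n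
  proof (induction n)
    case 0 thus ?case using i dl by simp
  next
    case (Suc n)
    have h1: "d (int n + 1) = c (i + \<delta> * (int n + 1))" using Suc by simp
    have h0: "d (int n) = c (i + \<delta> * int n)" using Suc by simp
    have nb: "d (int n + 1 + 1) = c (i + \<delta> * (int n + 1) + 1) \<or> d (int n + 1 + 1) = c (i + \<delta> * (int n + 1) - 1)"
      using zedge_nbr[OF cy] z[rule_format, of "int n + 1"] h1 by simp
    have ne: "d (int n + 2) \<noteq> d (int n)" by (rule cycf_basic(3)[OF cd])
    have "d (int n + 1 + 1) = c (i + \<delta> * (int n + 1 + 1))"
      using dl(1)
    proof
      assume "\<delta> = 1"
      thus ?thesis using nb ne h0 by (auto simp: algebra_simps)
    next
      assume "\<delta> = -1"
      thus ?thesis using nb ne h0 by (auto simp: algebra_simps)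
    qed
    thus ?case using h1 by (simp add: algebra_simps)
  qed
  have m3: "m \<ge> 3" and L3: "L \<ge> 3" using cycf_L[OF cd] cycf_L[OF cy] by auto
  have "d (int m) = d 0" using cycf_eq[OF cd] by simp
  hence "c (i + \<delta> * int m) = c i" using step[of m] i by simp
  hence "int L dvd (\<delta> * int m)" using cycf_eq[OF cy] by simp
  hence "int L dvd int m" using dl(1) by auto
  hence Lm: "L dvd m" by simp
  have "d (int L) = c (i + \<delta> * int L)" using step[of L] by simp
  also have "\<dots> = c i" using cycf_eq[OF cy] by simp
  finally have "d (int L) = d 0" using i by simp
  hence "int m dvd int L" using cycf_eq[OF cd] by simp
  hence mL: "m dvd L" by simp
  have "m = L" using Lm mL by (rule dvd_antisym[symmetric])
  thus ?thesis using dl step by blast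
qed


lemma wmin_props:
  fixes E :: "('n::finite \<times> 'n) set"
  assumes wpos: "\<forall>e\<in>E. w e > 0" and ne: "E \<noteq> {}"
  shows "Min (w ` E) > 0" "\<forall>e\<in>E. w e \<ge> Min (w ` E)"
proof -
  have f: "finite (w ` E)" by (rule finite_imageI) (rule finite)
  have "Min (w ` E) \<in> w ` E" using f ne by (intro Min_in) auto
  thus "Min (w ` E) > 0" using wpos by auto
  show "\<forall>e\<in>E. w e \<ge> Min (w ` E)" using f by auto
qed

lemma part_c:
  fixes E :: "('n::finite \<times> 'n) set"
  assumes noloops: "\<forall>i. (i, i) \<notin> E" and wpos: "\<forall>e\<in>E. w e > 0"
    and C: "C \<in> components E" and card: "card (cycles (und_adj E C)) > 1"
  shows "conv_radius (pk E w) < ereal (1 / sigma_min E w)"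
proof -
  let ?adj = "und_adj E C"
  let ?R = "{(x,y). und_adj E C x y}"
  have fin: "finite (cycles ?adj)" using card by (intro card_ge_0_finite) simp
  have "\<not> (\<forall>a\<in>cycles ?adj. \<forall>b\<in>cycles ?adj. a = b)"
    using card card_le_Suc0_iff_eq[OF fin] by simp
  then obtain K1 K2 where K12: "K1 \<in> cycles ?adj" "K2 \<in> cycles ?adj" "K1 \<noteq> K2" by blast
  obtain xs1 where xs1: "cycle_list ?adj xs1" using K12(1) unfolding cycles_def by blast
  obtain c L where cL: "cycf c L" "cedges E c" "\<forall>t. c t \<in> C"
    using cycle_to_dcyc[OF noloops C xs1] by blast
  have L3: "L \<ge> 3" by (rule cycf_L[OF cL(1)])
  have rC: "range c \<subseteq> C" using cL(3) by auto
  define zl where "zl = gmap c L 0 1"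
  have zln: "\<And>r. r < L \<Longrightarrow> zl ! r = c (int r)" unfolding zl_def by (simp add: gmap_nth)
  have zlc: "cycle_list ?adj zl"
    unfolding cycle_list_def
  proof (intro conjI allI impI)
    show "3 \<le> length zl" unfolding zl_def using L3 by simp
    show "distinct zl" unfolding distinct_conv_nth
    proof (intro allI impI)
      fix r s assume rs: "r < length zl" "s < length zl" "r \<noteq> s"
      hence rs': "r < L" "s < L" unfolding zl_def by auto
      show "zl ! r \<noteq> zl ! s"
      proof
        assume "zl ! r = zl ! s"
        hence "c (int r) = c (int s)" using zln rs' by simp
        hence "int L dvd (int r - int s)" using cycf_eq[OF cL(1)] by blast
        moreover have "int r - int s \<noteq> 0" using rs by simp
        ultimately have "\<bar>int L\<bar> \<le> \<bar>int r - int s\<bar>" using dvd_imp_le_int by blast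
        thus False using rs' by simp
      qed
    qed
  next
    fix r assume r: "r + 1 < length zl"
    hence r': "r + 1 < L" unfolding zl_def by simp
    have "(c (int r), c (int r + 1)) \<in> E" using cL(2) unfolding cedges_def by blast
    moreover have "c (int r) \<noteq> c (int r + 1)" using cycf_basic(2)[OF cL(1)] by blast
    moreover have z1: "zl ! r = c (int r)" using zln[of r] r' by simp
    moreover have z2: "zl ! (r + 1) = c (int r + 1)"
    proof -
      have "zl ! (r + 1) = c (int (r + 1))" using zln[of "r+1"] r' by blast
      also have "int (r + 1) = int r + 1" by simp
      finally show ?thesis .
    qed
    ultimately show "?adj (zl ! r) (zl ! (r + 1))"
      unfolding und_adj_def using cL(3) by simp
  next
    have ne: "zl \<noteq> []" unfolding zl_def using L3 by (simp add: gmap_def)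
    have lz: "last zl = c (int L - 1)" using zln[of "L-1"] ne L3 unfolding zl_def
      by (simp add: last_conv_nth of_nat_diff)
    have hz: "hd zl = c (int L - 1 + 1)"
    proof -
      have "hd zl = c 0" using zln[of 0] ne L3 by (simp add: hd_conv_nth)
      also have "\<dots> = c (int L - 1 + 1)" using cycf_eq[OF cL(1)] by simp
      finally show ?thesis .
    qed
    have "(c (int L - 1), c (int L - 1 + 1)) \<in> E" using cL(2) unfolding cedges_def by blast
    moreover have "c (int L - 1) \<noteq> c (int L - 1 + 1)" using cycf_basic(2)[OF cL(1)] by blast
    ultimately show "?adj (last zl) (hd zl)"
      unfolding und_adj_def lz hz using cL(3) by auto
  qed
  have zin: "rclass zl \<in> cycles ?adj" unfolding cycles_def rclass_def using zlc by blast
  obtain K where K: "K \<in> cycles ?adj" "K \<noteq> rclass zl"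
    using K12 by (cases "K1 = rclass zl") auto
  obtain xs where xs: "cycle_list ?adj xs" "K = rclass xs" using K(1) unfolding cycles_def rclass_def by blast
  define m where "m = length xs"
  define d where "d = (\<lambda>t. xs ! nat (t mod int m))"
  have xsp: "length xs \<ge> 3" "distinct xs" "\<And>r. r + 1 < length xs \<Longrightarrow> ?adj (xs ! r) (xs ! (r + 1))"
    "?adj (last xs) (hd xs)" using xs(1) unfolding cycle_list_def by blast+
  have epR: "epath ?R xs" unfolding epath_def using xsp(3) by simp
  have cd: "cycf d m" "cedges ?R d"
    using list_to_cyc[OF xsp(2) m_def[symmetric] _ epR] xsp(1,4) unfolding d_def m_def by auto
  have m3: "m \<ge> 3" using xsp(1) unfolding m_def .
  have dC: "range d \<subseteq> C"
  proof
    fix x assume "x \<in> range d"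
    then obtain t where t: "x = d t" by blast
    have "(d t, d (t+1)) \<in> ?R" using cd(2) unfolding cedges_def by blast
    thus "x \<in> C" using t unfolding und_adj_def by auto
  qed
  have "\<exists>p. \<not> Zedge c (d p) (d (p+1))"
  proof (rule ccontr)
    assume "\<not> (\<exists>p. \<not> Zedge c (d p) (d (p+1)))"
    hence z: "\<forall>t. Zedge c (d t) (d (t+1))" by blast
    obtain i \<delta> where mL: "m = L" and dl: "\<delta> = 1 \<or> \<delta> = -1" "\<forall>n::nat. d (int n) = c (i + \<delta> * int n)"
      using rot_lemma[OF cL(1) cd(1) z] by blast
    have "xs = gmap c L i \<delta>"
    proof (rule nth_equalityI)
      show "length xs = length (gmap c L i \<delta>)" using mL unfolding m_def by simp
      fix r assume "r < length xs"
      hence r: "r < m" unfolding m_def .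
      have "d (int r) = xs ! r" unfolding d_def using r by simp
      thus "xs ! r = gmap c L i \<delta> ! r" using dl(2) r mL by (simp add: gmap_nth)
    qed
    hence "rclass xs = rclass zl" unfolding zl_def
      using rclass_gmap[OF cL(1) dl(1)] rclass_gmap[OF cL(1), of 1 0] by simp
    thus False using K xs by simp
  qed
  then obtain p where nzp: "\<not> Zedge c (d p) (d (p+1))" by blast
  have e01: "(c 0, c (0+1)) \<in> E" "(c (0+1), c (0+1+1)) \<in> E" using cL(2) unfolding cedges_def by blast+
  have n02: "c (0+1+1) \<noteq> c 0" using cycf_basic(3)[OF cL(1), of 0] by simp
  note sg = sigma_props[OF wpos e01 n02]
  have ne: "E \<noteq> {}" using e01 by blast
  note wm = wmin_props[OF wpos ne]
  have "\<exists>P. detour c E P"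
  proof (cases "\<exists>a b. a \<in> C \<and> b \<in> C \<and> (a,b) \<in> E \<and> \<not> Zedge c a b \<and> (b,a) \<notin> E")
    case True
    then obtain a b where ab: "a \<in> C" "b \<in> C" "(a,b) \<in> E" "\<not> Zedge c a b" "(b,a) \<notin> E" by blast
    obtain d' M where d': "cycf d' M" "cedges E d'" "range d' \<subseteq> C" "\<exists>p. d' p = a \<and> d' (p+1) = b"
      using oneway_cyc[OF C ab(1,2,3,5)] by blast
    obtain p' where p': "d' p' = a" "d' (p'+1) = b" using d'(4) by blast
    show ?thesis
    proof (cases "\<exists>q. d' q \<in> range c")
      case True
      then obtain q where "d' q \<in> range c" by blast
      thus ?thesis using touch_detour[OF d'(1,2), of q c p'] p' ab(4) by simp
    next
      case False
      hence "range c \<inter> range d' = {}" by (auto simp: image_iff) (metis rangeI)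
      thus ?thesis using disjoint_detour[OF C cL(1,2) rC d'(1,2,3)] by blast
    qed
  next
    case False
    hence CII: "\<forall>a b. a \<in> C \<longrightarrow> b \<in> C \<longrightarrow> (a,b) \<in> E \<longrightarrow> \<not> Zedge c a b \<longrightarrow> (b,a) \<in> E" by blast
    show ?thesis
    proof (cases "\<exists>q. d q \<in> range c")
      case True
      then obtain q where "d q \<in> range c" by blast
      from touch_detour[OF cd this nzp] obtain P where "detour c ?R P" by blast
      thus ?thesis using convert_detour[OF _ CII] by blast
    next
      case False
      have cdE: "cedges E d" unfolding cedges_def
      proof
        fix t
        have ua: "und_adj E C (d t) (d (t+1))" using cd(2) unfolding cedges_def by blast
        have nz: "\<not> Zedge c (d t) (d (t+1))" using False Zedge_range by metis
        show "(d t, d (t+1)) \<in> E"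
        proof (cases "(d t, d (t+1)) \<in> E")
          case True thus ?thesis .
        next
          case F2: False
          hence "(d (t+1), d t) \<in> E" using ua unfolding und_adj_def by auto
          moreover have "\<not> Zedge c (d (t+1)) (d t)" using nz Zedge_sym by metis
          ultimately show ?thesis using CII ua unfolding und_adj_def by blast
        qed
      qed
      have "range c \<inter> range d = {}" using False by (auto simp: image_iff) (metis rangeI)
      thus ?thesis using disjoint_detour[OF C cL(1,2) rC cd(1) cdE dC] by blast
    qed
  qed
  then obtain P where P: "detour c E P" by blast
  obtain v X Y where br: "branch E v X Y" using detour_branch[OF noloops cL(1,2) P] by blast
  show ?thesis
    using branch_radius[OF wpos sg(1) sg(2) wm(1) wm(2)] br unfolding branch_def by blast
qed


lemma dcyc_radius:
  fixes E :: "('n::finite \<times> 'n) set"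
  assumes wpos: "\<forall>e\<in>E. w e > 0" and cy: "cycf c L" "cedges E c"
  shows "conv_radius (pk E w) \<le> ereal (1 / sigma_min E w)"
proof -
  have e01: "(c 0, c (0+1)) \<in> E" "(c (0+1), c (0+1+1)) \<in> E" using cy(2) unfolding cedges_def by blast+
  have n02: "c (0+1+1) \<noteq> c 0" using cycf_basic(3)[OF cy(1), of 0] by simp
  note sg = sigma_props[OF wpos e01 n02]
  have ne: "E \<noteq> {}" using e01 by blast
  note wm = wmin_props[OF wpos ne]
  have L: "L > 0" using cycf_L[OF cy(1)] by simp
  have "conv_radius (pk E w) \<le> ereal (1 / (root L 1 * sigma_min E w))"
  proof (rule radius_walks[OF wpos L _ sg(1) sg(2) wm(1) wm(2)])
    show "(1::real) \<le> 1" by simp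
    fix m :: nat assume m: "m \<ge> 1"
    define W where "W = cwalk c 0 (m*L)"
    have "W \<in> {vs. length vs = m*L + 1 \<and> nb_walk E vs \<and> hd vs = c 0 \<and> last vs = c 0}"
    proof -
      have "nb_walk E W" unfolding W_def by (rule cwalk_nb[OF cy])
      moreover have "last W = c 0" unfolding W_def using cycf_eq[OF cy(1)] by simp
      ultimately show ?thesis unfolding W_def by simp
    qed
    hence "{W} \<subseteq> {vs. length vs = m*L + 1 \<and> nb_walk E vs \<and> hd vs = c 0 \<and> last vs = c 0}
            \<and> (1::real) ^ m \<le> real (card {W})" by simp
    thus "\<exists>v T. T \<subseteq> {vs. length vs = m*L + 1 \<and> nb_walk E vs \<and> hd vs = v \<and> last vs = v}
                     \<and> (1::real) ^ m \<le> real (card T)" by blast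
  qed
  moreover have "root L 1 = 1" using L by simp
  ultimately show ?thesis by simp
qed


theorem theorem5p3:
  fixes E :: "('n::finite \<times> 'n) set" and w :: "'n \<times> 'n \<Rightarrow> real"
  assumes noloops: "\<forall>i. (i, i) \<notin> E"
    and wpos: "\<forall>e\<in>E. w e > 0"
  shows "((\<forall>C\<in>components E. is_tree (und_adj E C) C \<or> is_isolated_node (und_adj E C) C)
            \<longrightarrow> conv_radius (pk E w) = \<infinity>)
       \<and> ((\<forall>C\<in>components E. card (cycles (und_adj E C)) \<le> 1)
            \<and> (\<exists>C\<in>components E. card (cycles (und_adj E C)) = 1)
            \<longrightarrow> conv_radius (pk E w) \<le> ereal (1 / sigma_min E w))
       \<and> ((\<exists>C\<in>components E. card (cycles (und_adj E C)) > 1)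
            \<longrightarrow> conv_radius (pk E w) < ereal (1 / sigma_min E w))"
proof (intro conjI impI)
  assume "\<forall>C\<in>components E. is_tree (und_adj E C) C \<or> is_isolated_node (und_adj E C) C"
  thus "conv_radius (pk E w) = \<infinity>" by (rule part_a[OF noloops])
next
  assume h: "(\<forall>C\<in>components E. card (cycles (und_adj E C)) \<le> 1)
            \<and> (\<exists>C\<in>components E. card (cycles (und_adj E C)) = 1)"
  then obtain C where C: "C \<in> components E" "card (cycles (und_adj E C)) = 1" by blast
  hence "cycles (und_adj E C) \<noteq> {}" by auto
  then obtain K where "K \<in> cycles (und_adj E C)" by blast
  then obtain xs where xs: "cycle_list (und_adj E C) xs" unfolding cycles_def by blast
  obtain c L where cL: "cycf c L" "cedges E c" "\<forall>t. c t \<in> C"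
    using cycle_to_dcyc[OF noloops C(1) xs] by blast
  show "conv_radius (pk E w) \<le> ereal (1 / sigma_min E w)" by (rule dcyc_radius[OF wpos cL(1,2)])
next
  assume "\<exists>C\<in>components E. card (cycles (und_adj E C)) > 1"
  then obtain C where C: "C \<in> components E" "card (cycles (und_adj E C)) > 1" by blast
  show "conv_radius (pk E w) < ereal (1 / sigma_min E w)" by (rule part_c[OF noloops wpos C])
qed

end
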